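(* Let $(X_1,M_1),\dots,(X_n,M_n)$ be i.i.d. copies of $(X,M)\sim\mathbb{P}_{X,M}$ (no assumption on the missingness mechanism), let $\{P_\theta:\theta\in\Theta\}$ be a model of distributions on $\mathbb{R}^d$, and let $$ \theta_n^{\mathrm{MMD}}\in\arg\min_{\theta\in\Theta}\frac1n\sum_{i=1}^n \mathbb{D}^2\big(P_\theta^{(M_i)},\delta_{\{X_i^{(M_i)}\}}\big). $$ Assume: (1) $\Theta$ is compact and the minimizer $$\theta_\infty^{\mathrm{MMD}}=\arg\min_{\theta\in\Theta}\mathbb{E}_{M\sim\mathbb{P}_M}\Big[\mathbb{D}^2\big(P_\theta^{(M)},\mathbb{P}_{X\mid M}^{(M)}\big)\Big]$$ exists and is unique; (2) for each $m\in\{0,1\}^d$ in the support of $\mathbb{P}_M$, the map $\theta\mapsto\Phi(P_\theta^{(m)})$ from $\Theta$ to $\mathcal{H}$ is continuous. Then $\theta_n^{\mathrm{MMD}}\to\theta_\infty^{\mathrm{MMD}}$ $\mathbb{P}_{X,M}$-almost surely as $n\to\infty$.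
   Context: $X\in\mathbb{R}^d$ is the data vector, $M\in\{0,1\}^d$ the missingness mask ($M_j=0$: $X_j$ observed; $M_j=1$: missing); $\mathbb{P}_{X,M}$ is their joint law, $\mathbb{P}_M$ the law of $M$, and $\mathbb{P}_{X\mid M=m}$ the conditional law of $X$ given $M=m$. For $m\in\{0,1\}^d$, $x^{(m)}$ is the subvector of observed coordinates $\{j:m_j=0\}$, and for a distribution $Q$ on $\mathbb{R}^d$, $Q^{(m)}$ is the law of $Y^{(m)}$ for $Y\sim Q$. Convention: in every expectation over $M$ the empty pattern $(1,\dots,1)$ is excluded, i.e. $\mathbb{E}_M[f(M)]=\sum_{m\neq(1,\dots,1)}\mathbb{P}[M=m]f(m)$ (correspondingly, terms with $M_i=(1,\dots,1)$ in the empirical sum contribute zero). $k$ is a positive definite kernel bounded by $1$, characteristic, and dimension-independent (the same formula defines it in every dimension, e.g. Gaussian kernel), with RKHS $\mathcal{H}$; $\Phi(Q)=\mathbb{E}_{Y\sim Q}[k(Y,\cdot)]\in\mathcal{H}$ is the kernel mean embedding (and $\Phi(x)=k(x,\cdot)$), and $\mathbb{D}(Q_1,Q_2)=\|\Phi(Q_1)-\Phi(Q_2)\|_{\mathcal{H}}$ is the maximum mean discrepancy. *)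

theory Defs
  imports "HOL-Probability.Probability"
begin

text \<open>Data space R^d (coordinates indexed by a finite type 'd), mask space {0,1}^d
  (a mask m :: 'd => bool, m j = True meaning coordinate j is missing).\<close>

definition Xspace :: "('d \<Rightarrow> real) measure" where
  "Xspace = PiM UNIV (\<lambda>_. borel)"

definition Mspace :: "('d \<Rightarrow> bool) measure" where
  "Mspace = count_space UNIV"

definition XMspace :: "(('d \<Rightarrow> real) \<times> ('d \<Rightarrow> bool)) measure" where
  "XMspace = Xspace \<Otimes>\<^sub>M Mspace"

definition obs :: "('d \<Rightarrow> bool) \<Rightarrow> 'd set" where
  "obs m = {j. \<not> m j}"

definition empty_pattern :: "'d \<Rightarrow> bool" where
  "empty_pattern = (\<lambda>_. True)"

definition Ospace :: "('d \<Rightarrow> bool) \<Rightarrow> ('d \<Rightarrow> real) measure" where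
  "Ospace m = PiM (obs m) (\<lambda>_. borel)"

definition subvec :: "('d \<Rightarrow> bool) \<Rightarrow> ('d \<Rightarrow> real) \<Rightarrow> ('d \<Rightarrow> real)" where
  "subvec m x = restrict x (obs m)"

definition marg :: "('d \<Rightarrow> bool) \<Rightarrow> ('d \<Rightarrow> real) measure \<Rightarrow> ('d \<Rightarrow> real) measure" where
  "marg m Q = distr Q (Ospace m) (subvec m)"

definition probM :: "(('d \<Rightarrow> real) \<times> ('d \<Rightarrow> bool)) measure \<Rightarrow> ('d \<Rightarrow> bool) \<Rightarrow> real" where
  "probM PXM m = measure PXM (UNIV \<times> {m})"

definition condX :: "(('d \<Rightarrow> real) \<times> ('d \<Rightarrow> bool)) measure \<Rightarrow> ('d \<Rightarrow> bool) \<Rightarrow> ('d \<Rightarrow> real) measure" where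
  "condX PXM m = distr (uniform_measure PXM (UNIV \<times> {m})) Xspace fst"

text \<open>Squared MMD between Q1 and Q2 for a kernel k:
  ||Phi(Q1) - Phi(Q2)||_H^2 = E k(Y,Y') - 2 E k(Y,Z) + E k(Z,Z'),
  Y,Y' ~ Q1, Z,Z' ~ Q2 independent (expansion of the RKHS norm via the reproducing property).\<close>
definition mmd2 :: "('a \<Rightarrow> 'a \<Rightarrow> real) \<Rightarrow> 'a measure \<Rightarrow> 'a measure \<Rightarrow> real" where
  "mmd2 k Q1 Q2 =
     (\<integral>x. (\<integral>y. k x y \<partial>Q1) \<partial>Q1) - 2 * (\<integral>x. (\<integral>y. k x y \<partial>Q2) \<partial>Q1)
     + (\<integral>x. (\<integral>y. k x y \<partial>Q2) \<partial>Q2)"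

definition mmd :: "('a \<Rightarrow> 'a \<Rightarrow> real) \<Rightarrow> 'a measure \<Rightarrow> 'a measure \<Rightarrow> real" where
  "mmd k Q1 Q2 = sqrt (mmd2 k Q1 Q2)"

definition pd_kernel_on :: "'a measure \<Rightarrow> ('a \<Rightarrow> 'a \<Rightarrow> real) \<Rightarrow> bool" where
  "pd_kernel_on S k \<longleftrightarrow>
     (\<forall>x\<in>space S. \<forall>y\<in>space S. k x y = k y x) \<and>
     (\<forall>n (xs :: nat \<Rightarrow> 'a) (c :: nat \<Rightarrow> real). (\<forall>i<n. xs i \<in> space S) \<longrightarrow>
        (\<Sum>i<n. \<Sum>j<n. c i * c j * k (xs i) (xs j)) \<ge> 0)"

definition characteristic_kernel_on :: "'a measure \<Rightarrow> ('a \<Rightarrow> 'a \<Rightarrow> real) \<Rightarrow> bool" where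
  "characteristic_kernel_on S k \<longleftrightarrow>
     (\<forall>P Q. prob_space P \<longrightarrow> prob_space Q \<longrightarrow> sets P = sets S \<longrightarrow> sets Q = sets S \<longrightarrow>
        mmd k P Q = 0 \<longrightarrow> P = Q)"

definition good_kernel_on :: "'a measure \<Rightarrow> ('a \<Rightarrow> 'a \<Rightarrow> real) \<Rightarrow> bool" where
  "good_kernel_on S k \<longleftrightarrow>
     case_prod k \<in> borel_measurable (S \<Otimes>\<^sub>M S) \<and>
     pd_kernel_on S k \<and>
     (\<forall>x\<in>space S. \<forall>y\<in>space S. \<bar>k x y\<bar> \<le> 1) \<and>
     characteristic_kernel_on S k"

definition emp_risk ::
  "('d set \<Rightarrow> ('d \<Rightarrow> real) \<Rightarrow> ('d \<Rightarrow> real) \<Rightarrow> real) \<Rightarrow> ('p \<Rightarrow> ('d \<Rightarrow> real) measure)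
   \<Rightarrow> (nat \<Rightarrow> ('d \<Rightarrow> real) \<times> ('d \<Rightarrow> bool)) \<Rightarrow> nat \<Rightarrow> 'p \<Rightarrow> real" where
  "emp_risk k P z n \<theta> = (1 / real n) *
     (\<Sum>i<n. if snd (z i) = empty_pattern then 0 else
        (mmd (k (obs (snd (z i)))) (marg (snd (z i)) (P \<theta>))
             (return (Ospace (snd (z i))) (subvec (snd (z i)) (fst (z i)))))\<^sup>2)"

definition pop_risk ::
  "('d::finite set \<Rightarrow> ('d \<Rightarrow> real) \<Rightarrow> ('d \<Rightarrow> real) \<Rightarrow> real) \<Rightarrow> ('p \<Rightarrow> ('d \<Rightarrow> real) measure)
   \<Rightarrow> (('d \<Rightarrow> real) \<times> ('d \<Rightarrow> bool)) measure \<Rightarrow> 'p \<Rightarrow> real" where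
  "pop_risk k P PXM \<theta> =
     (\<Sum>m \<in> UNIV - {empty_pattern}. probM PXM m *
        (mmd (k (obs m)) (marg m (P \<theta>)) (marg m (condX PXM m)))\<^sup>2)"

end

theory Submission
  imports Defs "HOL-Probability.Hoeffding"
begin

definition Gk :: "('a \<Rightarrow> 'a \<Rightarrow> real) \<Rightarrow> 'a measure \<Rightarrow> 'a measure \<Rightarrow> real" where
  "Gk \<kappa> Q1 Q2 = (\<integral>x. (\<integral>y. \<kappa> x y \<partial>Q2) \<partial>Q1)"

lemma mmd2_Gk: "mmd2 \<kappa> Q1 Q2 = Gk \<kappa> Q1 Q1 - 2 * Gk \<kappa> Q1 Q2 + Gk \<kappa> Q2 Q2"
  by (simp add: mmd2_def Gk_def)

lemma prob_integral_abs_bound: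
  fixes f :: "'a \<Rightarrow> real"
  assumes Q: "prob_space Q" and f: "f \<in> borel_measurable Q" and b: "\<And>x. x \<in> space Q \<Longrightarrow> \<bar>f x\<bar> \<le> B"
  shows "\<bar>\<integral>x. f x \<partial>Q\<bar> \<le> B"
proof -
  interpret prob_space Q by fact
  have i: "integrable Q f" using f b by (intro integrable_const_bound[where B=B]) auto
  have "\<bar>\<integral>x. f x \<partial>Q\<bar> \<le> (\<integral>x. \<bar>f x\<bar> \<partial>Q)" by (rule integral_abs_bound)
  also have "\<dots> \<le> (\<integral>x. B \<partial>Q)" by (intro integral_mono) (use i b in auto)
  finally show ?thesis by (simp add: prob_space)
qed

lemma prob_integrable_bound:
  fixes f :: "'a \<Rightarrow> real"
  assumes Q: "prob_space Q" and f: "f \<in> borel_measurable Q" and b: "\<And>x. x \<in> space Q \<Longrightarrow> \<bar>f x\<bar> \<le> B"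
  shows "integrable Q f"
proof -
  interpret prob_space Q by fact
  show ?thesis using f b by (intro integrable_const_bound[where B=B]) auto
qed

locale gk =
  fixes S :: "'a measure" and \<kappa> :: "'a \<Rightarrow> 'a \<Rightarrow> real"
  assumes good: "good_kernel_on S \<kappa>"
begin

lemma meas: "case_prod \<kappa> \<in> borel_measurable (S \<Otimes>\<^sub>M S)"
  using good by (simp add: good_kernel_on_def)

lemma sym: "x \<in> space S \<Longrightarrow> y \<in> space S \<Longrightarrow> \<kappa> x y = \<kappa> y x"
  using good unfolding good_kernel_on_def pd_kernel_on_def by blast

lemma bnd: "x \<in> space S \<Longrightarrow> y \<in> space S \<Longrightarrow> \<bar>\<kappa> x y\<bar> \<le> 1"
  using good unfolding good_kernel_on_def by blast

lemma pd:
  fixes n :: nat and xs :: "nat \<Rightarrow> 'a" and c :: "nat \<Rightarrow> real"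
  assumes "\<forall>i<n. xs i \<in> space S"
  shows "0 \<le> (\<Sum>i<n. \<Sum>j<n. c i * c j * \<kappa> (xs i) (xs j))"
proof -
  have H: "\<forall>n (xs :: nat \<Rightarrow> 'a) (c :: nat \<Rightarrow> real). (\<forall>i<n. xs i \<in> space S) \<longrightarrow>
        (\<Sum>i<n. \<Sum>j<n. c i * c j * \<kappa> (xs i) (xs j)) \<ge> 0"
    using good unfolding good_kernel_on_def pd_kernel_on_def by blast
  show ?thesis using spec[OF spec[OF spec[OF H, of n], of xs], of c] assms by blast
qed

definition PS :: "'a measure \<Rightarrow> bool" where
  "PS Q \<longleftrightarrow> prob_space Q \<and> sets Q = sets S"

lemma PS_space: "PS Q \<Longrightarrow> space Q = space S"
  unfolding PS_def by (metis sets_eq_imp_space_eq)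

lemma meas_Q:
  assumes "sets Q1 = sets S" "sets Q2 = sets S"
  shows "case_prod \<kappa> \<in> borel_measurable (Q1 \<Otimes>\<^sub>M Q2)"
proof -
  have eq: "sets (Q1 \<Otimes>\<^sub>M Q2) = sets (S \<Otimes>\<^sub>M S)"
    by (rule sets_pair_measure_cong[OF assms])
  show ?thesis unfolding measurable_cong_sets[OF eq refl] by (rule meas)
qed

lemma inner_meas:
  assumes "PS Q2" "sets M = sets S"
  shows "(\<lambda>x. \<integral>y. \<kappa> x y \<partial>Q2) \<in> borel_measurable M"
proof -
  interpret prob_space Q2 using assms unfolding PS_def by auto
  have "case_prod \<kappa> \<in> borel_measurable (M \<Otimes>\<^sub>M Q2)"
    using assms meas_Q[of M Q2] unfolding PS_def by auto
  then show ?thesis by (rule borel_measurable_lebesgue_integral)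
qed

lemma slice2_meas:
  assumes "sets Q = sets S" "x \<in> space S"
  shows "(\<lambda>y. \<kappa> x y) \<in> borel_measurable Q"
proof -
  have "(\<lambda>y. \<kappa> x y) \<in> borel_measurable S"
    using measurable_Pair2[OF meas assms(2)] by simp
  then show ?thesis unfolding measurable_cong_sets[OF assms(1) refl] .
qed

lemma slice1_meas:
  assumes "sets Q = sets S" "y \<in> space S"
  shows "(\<lambda>x. \<kappa> x y) \<in> borel_measurable Q"
proof -
  have "(\<lambda>x. \<kappa> x y) \<in> borel_measurable S"
    using measurable_Pair1[OF meas assms(2)] by simp
  then show ?thesis unfolding measurable_cong_sets[OF assms(1) refl] .
qed

lemma inner_bnd:
  assumes "PS Q2" "x \<in> space S"
  shows "\<bar>\<integral>y. \<kappa> x y \<partial>Q2\<bar> \<le> 1"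
  using assms by (intro prob_integral_abs_bound) (auto simp: PS_def PS_space[OF assms(1)] intro!: slice2_meas bnd)

lemma Gk_bnd:
  assumes "PS Q1" "PS Q2"
  shows "\<bar>Gk \<kappa> Q1 Q2\<bar> \<le> 1"
  unfolding Gk_def
proof (rule prob_integral_abs_bound)
  show "prob_space Q1" using assms by (simp add: PS_def)
  show "(\<lambda>x. \<integral>y. \<kappa> x y \<partial>Q2) \<in> borel_measurable Q1"
    using assms by (intro inner_meas) (auto simp: PS_def)
  fix x assume "x \<in> space Q1"
  then show "\<bar>\<integral>y. \<kappa> x y \<partial>Q2\<bar> \<le> 1"
    using assms by (intro inner_bnd) (auto simp: PS_space)
qed

lemma Gk_sym:
  assumes "PS Q1" "PS Q2"
  shows "Gk \<kappa> Q1 Q2 = Gk \<kappa> Q2 Q1"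
proof -
  interpret Q1: prob_space Q1 using assms unfolding PS_def by auto
  interpret Q2: prob_space Q2 using assms unfolding PS_def by auto
  interpret pair_sigma_finite Q1 Q2 ..
  interpret P: prob_space "Q1 \<Otimes>\<^sub>M Q2" by (rule prob_space_pair) unfold_locales
  have int: "integrable (Q1 \<Otimes>\<^sub>M Q2) (case_prod \<kappa>)"
    using assms by (intro P.integrable_const_bound[where B=1])
      (auto simp: space_pair_measure PS_space PS_def intro!: bnd meas_Q)
  have "Gk \<kappa> Q1 Q2 = (\<integral>y. (\<integral>x. \<kappa> x y \<partial>Q1) \<partial>Q2)"
    unfolding Gk_def by (rule Fubini_integral[OF int, symmetric])
  also have "\<dots> = (\<integral>y. (\<integral>x. \<kappa> y x \<partial>Q1) \<partial>Q2)"
  proof (rule Bochner_Integration.integral_cong[OF refl])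
    fix y assume y: "y \<in> space Q2"
    show "(\<integral>x. \<kappa> x y \<partial>Q1) = (\<integral>x. \<kappa> y x \<partial>Q1)"
      by (rule Bochner_Integration.integral_cong[OF refl]) (use assms y in \<open>auto simp: PS_space intro!: sym\<close>)
  qed
  finally show ?thesis unfolding Gk_def .
qed

lemma PS_return: "w \<in> space S \<Longrightarrow> PS (return S w)"
  by (simp add: PS_def prob_space_return)

lemma Gk_ret_r:
  assumes "sets Q = sets S" "w \<in> space S"
  shows "Gk \<kappa> Q (return S w) = (\<integral>x. \<kappa> x w \<partial>Q)"
  unfolding Gk_def
proof (rule Bochner_Integration.integral_cong[OF refl])
  fix x assume "x \<in> space Q"
  then have "x \<in> space S" using assms sets_eq_imp_space_eq by blast
  then show "(\<integral>y. \<kappa> x y \<partial>return S w) = \<kappa> x w"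
    using assms by (intro integral_return) (auto intro!: slice2_meas)
qed

lemma Gk_ret_l:
  assumes "PS Q" "w \<in> space S"
  shows "Gk \<kappa> (return S w) Q = (\<integral>y. \<kappa> w y \<partial>Q)"
  unfolding Gk_def using assms
  by (intro integral_return) (auto intro!: inner_meas simp: PS_def)


lemma offdiag:
  fixes M :: "nat \<Rightarrow> 'a measure"
  assumes PSM: "\<And>p. PS (M p)" and I: "finite I" "p \<in> I" "q \<in> I" "p \<noteq> q"
  shows "(\<integral>\<omega>. \<kappa> (\<omega> p) (\<omega> q) \<partial>PiM I M) = Gk \<kappa> (M q) (M p)"
proof -
  interpret product_prob_space M
    by (rule product_prob_spaceI) (use PSM in \<open>auto simp: PS_def\<close>)
  have spM: "space (M i) = space S" for i using PSM PS_space by blast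
  have setsM: "sets (M i) = sets S" for i using PSM PS_def by blast
  define I' where "I' = I - {p}"
  have II': "I = insert p I'" "p \<notin> I'" "finite I'" "q \<in> I'" using I by (auto simp: I'_def)
  define I'' where "I'' = I' - {q}"
  have I'I'': "I' = insert q I''" "q \<notin> I''" "finite I''" using II' by (auto simp: I''_def)
  have fm: "(\<lambda>\<omega>. \<kappa> (\<omega> a) (\<omega> b)) \<in> borel_measurable (PiM J M)" if "a \<in> J" "b \<in> J" for a b J
  proof -
    have "(\<lambda>\<omega>. (\<omega> a, \<omega> b)) \<in> PiM J M \<rightarrow>\<^sub>M M a \<Otimes>\<^sub>M M b"
      using that by (intro measurable_Pair measurable_component_singleton)
    from measurable_comp[OF this meas_Q[OF setsM setsM]] show ?thesis by (simp add: comp_def)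
  qed
  have fi: "integrable (PiM J M) (\<lambda>\<omega>. \<kappa> (\<omega> a) (\<omega> b))" if "a \<in> J" "b \<in> J" for a b J
  proof (rule prob_integrable_bound[where B=1])
    show "prob_space (PiM J M)" by (rule prob_space_PiM) (use PSM in \<open>auto simp: PS_def\<close>)
    show "(\<lambda>\<omega>. \<kappa> (\<omega> a) (\<omega> b)) \<in> borel_measurable (PiM J M)" by (rule fm[OF that])
    fix \<omega> assume "\<omega> \<in> space (PiM J M)"
    then have "\<omega> a \<in> space S" "\<omega> b \<in> space S" using that spM by (auto simp: space_PiM)
    then show "\<bar>\<kappa> (\<omega> a) (\<omega> b)\<bar> \<le> 1" by (rule bnd)
  qed
  define g where "g = (\<lambda>z. \<integral>y. \<kappa> z y \<partial>M p)"
  have gm: "g \<in> borel_measurable (M q)" unfolding g_def by (rule inner_meas[OF PSM setsM])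
  have gb: "\<bar>g z\<bar> \<le> 1" if "z \<in> space S" for z unfolding g_def by (rule inner_bnd[OF PSM that])
  have "(\<integral>\<omega>. \<kappa> (\<omega> p) (\<omega> q) \<partial>PiM I M) = (\<integral>x. (\<integral>y. \<kappa> ((x(p:=y)) p) ((x(p:=y)) q) \<partial>M p) \<partial>PiM I' M)"
    unfolding II'(1) by (rule product_integral_insert[OF II'(3,2)]) (rule fi, use II' in auto)
  also have "\<dots> = (\<integral>x. g (x q) \<partial>PiM I' M)"
  proof (rule Bochner_Integration.integral_cong[OF refl])
    fix x assume x: "x \<in> space (PiM I' M)"
    then have xq: "x q \<in> space S" using II' spM by (auto simp: space_PiM)
    show "(\<integral>y. \<kappa> ((x(p:=y)) p) ((x(p:=y)) q) \<partial>M p) = g (x q)"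
      unfolding g_def using I(4) by (intro Bochner_Integration.integral_cong[OF refl]) (auto simp: spM xq intro!: sym)
  qed
  also have "\<dots> = (\<integral>x. (\<integral>z. g ((x(q:=z)) q) \<partial>M q) \<partial>PiM I'' M)"
    unfolding I'I''(1)
  proof (rule product_integral_insert[OF I'I''(3,2)])
    show "integrable (PiM (insert q I'') M) (\<lambda>x. g (x q))"
    proof (rule prob_integrable_bound[where B=1])
      show "prob_space (PiM (insert q I'') M)" by (rule prob_space_PiM) (use PSM in \<open>auto simp: PS_def\<close>)
      show "(\<lambda>x. g (x q)) \<in> borel_measurable (PiM (insert q I'') M)"
      proof -
        have "(\<lambda>x. x q) \<in> PiM (insert q I'') M \<rightarrow>\<^sub>M M q" by (rule measurable_component_singleton) simp
        from measurable_comp[OF this gm] show ?thesis by (simp add: comp_def)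
      qed
      fix x assume "x \<in> space (PiM (insert q I'') M)"
      then have "x q \<in> space S" using spM by (auto simp: space_PiM)
      then show "\<bar>g (x q)\<bar> \<le> 1" by (rule gb)
    qed
  qed
  also have "\<dots> = (\<integral>x. (\<integral>z. g z \<partial>M q) \<partial>PiM I'' M)" by simp
  also have "\<dots> = (\<integral>z. g z \<partial>M q)"
  proof -
    interpret PP: prob_space "PiM I'' M" by (rule prob_space_PiM) (use PSM in \<open>auto simp: PS_def\<close>)
    show ?thesis by (simp add: PP.prob_space)
  qed
  also have "\<dots> = Gk \<kappa> (M q) (M p)" unfolding g_def Gk_def ..
  finally show ?thesis .
qed

lemma sum_mod_rep:
  fixes f :: "nat \<Rightarrow> real"
  shows "(\<Sum>p<r*N. f (p mod r)) = real N * (\<Sum>i<r. f i)"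
proof (induction N)
  case 0 then show ?case by simp
next
  case (Suc N)
  have "(\<Sum>p<r*Suc N. f (p mod r)) = (\<Sum>p\<in>{0..<r*N}. f (p mod r)) + (\<Sum>p\<in>{r*N..<r*N+r}. f (p mod r))"
    by (simp add: sum.atLeastLessThan_concat atLeast0LessThan[symmetric] add.commute)
  also have "(\<Sum>p\<in>{r*N..<r*N+r}. f (p mod r)) = (\<Sum>i<r. f i)"
    using sum.shift_bounds_nat_ivl[of "\<lambda>p. f (p mod r)" 0 "r*N" r]
    by (simp add: atLeast0LessThan add.commute)
  finally show ?case using Suc by (simp add: atLeast0LessThan algebra_simps)
qed

lemma pd_measures:
  fixes Q :: "nat \<Rightarrow> 'a measure" and c :: "nat \<Rightarrow> real"
  assumes PSQ: "\<And>i. i < r \<Longrightarrow> PS (Q i)"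
  shows "0 \<le> (\<Sum>i<r. \<Sum>j<r. c i * c j * Gk \<kappa> (Q i) (Q j))"
proof (cases "r = 0")
  case True then show ?thesis by simp
next
  case False
  define F where "F = (\<Sum>i<r. \<Sum>j<r. c i * c j * Gk \<kappa> (Q i) (Q j))"
  define C where "C = (\<Sum>i<r. (c i)^2)"
  have key: "0 \<le> real N * real N * F + 2 * real N * C" for N
  proof -
    define M where "M = (\<lambda>p. Q (p mod r))"
    define I where "I = {..<r*N}"
    define cc where "cc = (\<lambda>p. c (p mod r))"
    have PSM: "PS (M p)" for p using PSQ False by (simp add: M_def)
    interpret product_prob_space M
      by (rule product_prob_spaceI) (use PSM in \<open>auto simp: PS_def\<close>)
    interpret PI: prob_space "PiM I M" by (rule prob_space_PiM) (use PSM in \<open>auto simp: PS_def\<close>)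
    have spM: "space (M i) = space S" for i using PSM PS_space by blast
    have setsM: "sets (M i) = sets S" for i using PSM PS_def by blast
    define E where "E = (\<lambda>p q. \<integral>\<omega>. \<kappa> (\<omega> p) (\<omega> q) \<partial>PiM I M)"
    have fm: "(\<lambda>\<omega>. \<kappa> (\<omega> a) (\<omega> b)) \<in> borel_measurable (PiM I M)" if "a \<in> I" "b \<in> I" for a b
    proof -
      have "(\<lambda>\<omega>. (\<omega> a, \<omega> b)) \<in> PiM I M \<rightarrow>\<^sub>M M a \<Otimes>\<^sub>M M b"
        using that by (intro measurable_Pair measurable_component_singleton)
      from measurable_comp[OF this meas_Q[OF setsM setsM]] show ?thesis by (simp add: comp_def)
    qed
    have fi: "integrable (PiM I M) (\<lambda>\<omega>. \<kappa> (\<omega> a) (\<omega> b))" if "a \<in> I" "b \<in> I" for a b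
    proof (rule PI.integrable_const_bound[where B=1])
      show "(\<lambda>\<omega>. \<kappa> (\<omega> a) (\<omega> b)) \<in> borel_measurable (PiM I M)" by (rule fm[OF that])
      show "AE \<omega> in PiM I M. norm (\<kappa> (\<omega> a) (\<omega> b)) \<le> 1"
      proof (rule AE_I2)
        fix \<omega> assume "\<omega> \<in> space (PiM I M)"
        then have "\<omega> a \<in> space S" "\<omega> b \<in> space S" using that spM by (auto simp: space_PiM)
        then show "norm (\<kappa> (\<omega> a) (\<omega> b)) \<le> 1" using bnd by simp
      qed
    qed
    have "0 \<le> (\<integral>\<omega>. (\<Sum>p\<in>I. \<Sum>q\<in>I. cc p * cc q * \<kappa> (\<omega> p) (\<omega> q)) \<partial>PiM I M)"
    proof (rule integral_nonneg_AE, rule AE_I2)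
      fix \<omega> assume "\<omega> \<in> space (PiM I M)"
      then have "\<forall>i<r*N. \<omega> i \<in> space S" using spM by (auto simp: space_PiM I_def)
      then show "0 \<le> (\<Sum>p\<in>I. \<Sum>q\<in>I. cc p * cc q * \<kappa> (\<omega> p) (\<omega> q))"
        unfolding I_def by (rule pd)
    qed
    also have "\<dots> = (\<Sum>p\<in>I. \<Sum>q\<in>I. cc p * cc q * E p q)"
      unfolding E_def
      by (subst Bochner_Integration.integral_sum, use fi in \<open>auto intro!: Bochner_Integration.integrable_sum\<close>)+
    also have "\<dots> = (\<Sum>p\<in>I. \<Sum>q\<in>I. cc p * cc q * (Gk \<kappa> (M p) (M q) + (if p = q then E p p - Gk \<kappa> (M p) (M p) else 0)))"
    proof (intro sum.cong refl)
      fix p q assume "p \<in> I" "q \<in> I"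
      then show "cc p * cc q * E p q = cc p * cc q * (Gk \<kappa> (M p) (M q) + (if p = q then E p p - Gk \<kappa> (M p) (M p) else 0))"
        using offdiag[OF PSM, of I p q] Gk_sym[OF PSM PSM] by (auto simp: E_def I_def)
    qed
    also have "\<dots> = (\<Sum>p\<in>I. \<Sum>q\<in>I. cc p * cc q * Gk \<kappa> (M p) (M q)) + (\<Sum>p\<in>I. (cc p)^2 * (E p p - Gk \<kappa> (M p) (M p)))"
    proof -
      have d: "(\<Sum>q\<in>I. cc p * cc q * (if p = q then E p p - Gk \<kappa> (M p) (M p) else 0)) = (cc p)^2 * (E p p - Gk \<kappa> (M p) (M p))"
        if "p \<in> I" for p
      proof -
        have "(\<Sum>q\<in>I. cc p * cc q * (if p = q then E p p - Gk \<kappa> (M p) (M p) else 0))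
            = (\<Sum>q\<in>I. if p = q then cc p * cc q * (E p p - Gk \<kappa> (M p) (M p)) else 0)"
          by (intro sum.cong refl) auto
        also have "\<dots> = (cc p)^2 * (E p p - Gk \<kappa> (M p) (M p))"
          using that by (simp add: sum.delta' power2_eq_square I_def)
        finally show ?thesis .
      qed
      show ?thesis
        by (simp add: distrib_left sum.distrib d del: mult_zero_right mult_zero_left)
    qed
    also have "(\<Sum>p\<in>I. \<Sum>q\<in>I. cc p * cc q * Gk \<kappa> (M p) (M q)) = real N * real N * F"
    proof -
      have "(\<Sum>p\<in>I. \<Sum>q\<in>I. cc p * cc q * Gk \<kappa> (M p) (M q)) = (\<Sum>p\<in>I. real N * (\<Sum>j<r. c (p mod r) * c j * Gk \<kappa> (Q (p mod r)) (Q j)))"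
        unfolding I_def cc_def M_def by (intro sum.cong refl) (rule sum_mod_rep[of "\<lambda>j. c _ * c j * Gk \<kappa> (Q _) (Q j)"])
      also have "\<dots> = real N * (\<Sum>p\<in>I. (\<Sum>j<r. c (p mod r) * c j * Gk \<kappa> (Q (p mod r)) (Q j)))"
        by (simp add: sum_distrib_left)
      also have "\<dots> = real N * (real N * F)"
        unfolding I_def F_def by (subst sum_mod_rep[of "\<lambda>i. \<Sum>j<r. c i * c j * Gk \<kappa> (Q i) (Q j)"]) simp
      finally show ?thesis by simp
    qed
    also have "(\<Sum>p\<in>I. (cc p)^2 * (E p p - Gk \<kappa> (M p) (M p))) \<le> (\<Sum>p\<in>I. (cc p)^2 * 2)"
    proof (rule sum_mono)
      fix p assume p: "p \<in> I"
      have "\<bar>E p p\<bar> \<le> 1" unfolding E_def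
      proof (rule prob_integral_abs_bound)
        show "prob_space (PiM I M)" by (rule PI.prob_space_axioms)
        show "(\<lambda>\<omega>. \<kappa> (\<omega> p) (\<omega> p)) \<in> borel_measurable (PiM I M)" by (rule fm[OF p p])
        fix \<omega> assume "\<omega> \<in> space (PiM I M)"
        then have "\<omega> p \<in> space S" using p spM by (auto simp: space_PiM)
        then show "\<bar>\<kappa> (\<omega> p) (\<omega> p)\<bar> \<le> 1" using bnd by simp
      qed
      moreover have "\<bar>Gk \<kappa> (M p) (M p)\<bar> \<le> 1" by (rule Gk_bnd[OF PSM PSM])
      ultimately show "(cc p)^2 * (E p p - Gk \<kappa> (M p) (M p)) \<le> (cc p)^2 * 2"
        by (intro mult_left_mono) auto
    qed
    also have "(\<Sum>p\<in>I. (cc p)^2 * 2) = 2 * real N * C"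
      unfolding I_def cc_def C_def using sum_mod_rep[of "\<lambda>i. (c i)^2 * 2" r N]
      by (simp add: sum_distrib_right[symmetric] sum_distrib_left[symmetric] mult.commute)
    finally show ?thesis by simp
  qed
  show ?thesis
  proof (rule ccontr)
    assume "\<not> ?thesis"
    then have F: "F < 0" unfolding F_def by simp
    have C0: "0 \<le> C" unfolding C_def by (simp add: sum_nonneg)
    obtain N :: nat where N: "2 * C / (- F) < real N" using reals_Archimedean2 by blast
    have mF: "0 < - F" using F by simp
    have "2 * C < real N * (- F)" using N pos_divide_less_eq[OF mF] by blast
    then have Npos: "real N > 0" using C0 F by (smt (verit) mult_nonpos_nonneg mult_nonneg_nonneg)
    have "real N * F + 2 * C < 0" using \<open>2 * C < real N * (- F)\<close> by simp
    then have "real N * (real N * F + 2 * C) < 0" using Npos by (simp add: mult_pos_neg)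
    with key[of N] show False by (simp add: algebra_simps)
  qed
qed


lemma quad_disc:
  fixes U W V :: real
  assumes U: "0 \<le> U" and q: "\<And>t. 0 \<le> t^2 * U + 2 * t * W + V"
  shows "W^2 \<le> U * V"
proof (cases "U = 0")
  case True
  have "W = 0"
  proof (rule ccontr)
    assume W: "W \<noteq> 0"
    have "0 \<le> (-(V+1)/(2*W))^2 * U + 2 * (-(V+1)/(2*W)) * W + V" by (rule q)
    also have "\<dots> = -1" using True W by (simp add: field_simps)
    finally show False by simp
  qed
  then show ?thesis using True by simp
next
  case False
  then have Up: "U > 0" using U by simp
  have "0 \<le> (-W/U)^2 * U + 2 * (-W/U) * W + V" by (rule q)
  also have "\<dots> = V - W^2 / U" using Up by (simp add: field_simps power2_eq_square)
  finally have "W^2 / U \<le> V" by simp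
  then show ?thesis using Up by (simp add: divide_le_eq mult.commute)
qed

definition Q4 :: "'a measure \<Rightarrow> 'a measure \<Rightarrow> 'a measure \<Rightarrow> 'a measure \<Rightarrow> nat \<Rightarrow> 'a measure" where
  "Q4 A B C D i = (if i = 0 then A else if i = 1 then B else if i = 2 then C else D)"

definition c4 :: "real \<Rightarrow> real \<Rightarrow> real \<Rightarrow> real \<Rightarrow> nat \<Rightarrow> real" where
  "c4 a b c d i = (if i = 0 then a else if i = 1 then b else if i = 2 then c else d)"

lemma sum4: "(\<Sum>i<(4::nat). f i) = f 0 + f 1 + f 2 + (f 3 :: real)"
  by (simp add: numeral_eq_Suc)

lemma cs4:
  fixes aA aB bA bB :: real
  assumes P: "PS Q0" "PS Q1" "PS Q2" "PS Q3"
  defines "UU \<equiv> aA^2 * Gk \<kappa> Q0 Q0 + 2 * aA * aB * Gk \<kappa> Q0 Q1 + aB^2 * Gk \<kappa> Q1 Q1"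
      and "VV \<equiv> bA^2 * Gk \<kappa> Q2 Q2 + 2 * bA * bB * Gk \<kappa> Q2 Q3 + bB^2 * Gk \<kappa> Q3 Q3"
      and "UV \<equiv> aA * bA * Gk \<kappa> Q0 Q2 + aA * bB * Gk \<kappa> Q0 Q3 + aB * bA * Gk \<kappa> Q1 Q2 + aB * bB * Gk \<kappa> Q1 Q3"
  shows "UV^2 \<le> UU * VV" "0 \<le> UU" "0 \<le> VV"
proof -
  have PSQ: "PS (Q4 Q0 Q1 Q2 Q3 i)" for i using P by (simp add: Q4_def)
  have symm: "Gk \<kappa> Q1 Q0 = Gk \<kappa> Q0 Q1" "Gk \<kappa> Q2 Q0 = Gk \<kappa> Q0 Q2" "Gk \<kappa> Q3 Q0 = Gk \<kappa> Q0 Q3"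
     "Gk \<kappa> Q2 Q1 = Gk \<kappa> Q1 Q2" "Gk \<kappa> Q3 Q1 = Gk \<kappa> Q1 Q3" "Gk \<kappa> Q3 Q2 = Gk \<kappa> Q2 Q3"
    using Gk_sym P by metis+
  have q: "0 \<le> t^2 * UU + 2 * t * UV + VV" for t
  proof -
    have "0 \<le> (\<Sum>i<4. \<Sum>j<4. c4 (t*aA) (t*aB) bA bB i * c4 (t*aA) (t*aB) bA bB j * Gk \<kappa> (Q4 Q0 Q1 Q2 Q3 i) (Q4 Q0 Q1 Q2 Q3 j))"
      by (rule pd_measures) (rule PSQ)
    also have "\<dots> = t^2 * UU + 2 * t * UV + VV"
      unfolding sum4 UU_def VV_def UV_def by (simp add: c4_def Q4_def symm power2_eq_square algebra_simps)
    finally show ?thesis .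
  qed
  have q1: "0 \<le> UU"
    using q[of 1] pd_measures[of 4 "Q4 Q0 Q1 Q2 Q3" "c4 aA aB 0 0", OF PSQ]
    unfolding sum4 UU_def by (simp add: c4_def Q4_def symm power2_eq_square algebra_simps)
  have q2: "0 \<le> VV"
    using q[of 0] by simp
  show "UV^2 \<le> UU * VV" by (rule quad_disc[OF q1 q])
  show "0 \<le> UU" by fact
  show "0 \<le> VV" by fact
qed

lemma mmd2_nonneg:
  assumes "PS P" "PS Q"
  shows "0 \<le> mmd2 \<kappa> P Q"
  using cs4(2)[OF assms assms, where aA=1 and aB="-1"] Gk_sym[OF assms] by (simp add: mmd2_Gk)

lemma mmd_sq:
  assumes "PS P" "PS Q"
  shows "(mmd \<kappa> P Q)^2 = mmd2 \<kappa> P Q"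
  using mmd2_nonneg[OF assms] by (simp add: mmd_def)

lemma mmd_nonneg: "PS P \<Longrightarrow> PS Q \<Longrightarrow> 0 \<le> mmd \<kappa> P Q"
  using mmd2_nonneg by (simp add: mmd_def)

lemma mmd_sym:
  assumes "PS P" "PS Q"
  shows "mmd \<kappa> P Q = mmd \<kappa> Q P"
  using Gk_sym[OF assms] by (simp add: mmd_def mmd2_Gk)

lemma abs_le_sqrt_prod:
  fixes W U V :: real
  assumes "W^2 \<le> U * V" "0 \<le> U" "0 \<le> V"
  shows "\<bar>W\<bar> \<le> sqrt U * sqrt V"
proof -
  have "\<bar>W\<bar> = sqrt (W^2)" by simp
  also have "\<dots> \<le> sqrt (U * V)" using assms(1) by (rule real_sqrt_le_mono)
  also have "\<dots> = sqrt U * sqrt V" by (simp add: real_sqrt_mult)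
  finally show ?thesis .
qed

lemma mmd_triangle:
  assumes "PS P" "PS P'" "PS C"
  shows "mmd \<kappa> P C \<le> mmd \<kappa> P P' + mmd \<kappa> P' C"
proof -
  note cs = cs4(1)[OF assms(1,2,2,3), where aA=1 and aB="-1" and bA=1 and bB="-1"]
    cs4(2)[OF assms(1,2,2,3), where aA=1 and aB="-1"] cs4(3)[OF assms(1,2,2,3), where bA=1 and bB="-1"]
  let ?UU = "mmd2 \<kappa> P P'" and ?VV = "mmd2 \<kappa> P' C"
  let ?UV = "Gk \<kappa> P P' - Gk \<kappa> P C - Gk \<kappa> P' P' + Gk \<kappa> P' C"
  have e1: "?UV^2 \<le> ?UU * ?VV" "0 \<le> ?UU" "0 \<le> ?VV"
    using cs Gk_sym[OF assms(1) assms(2)] by (simp_all add: mmd2_Gk algebra_simps)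
  have e2: "mmd2 \<kappa> P C = ?UU + 2 * ?UV + ?VV"
    by (simp add: mmd2_Gk algebra_simps)
  have "\<bar>?UV\<bar> \<le> sqrt ?UU * sqrt ?VV" by (rule abs_le_sqrt_prod[OF e1])
  then have "mmd2 \<kappa> P C \<le> (sqrt ?UU + sqrt ?VV)^2"
    using e1 e2 by (simp add: power2_sum)
  then have "sqrt (mmd2 \<kappa> P C) \<le> sqrt ?UU + sqrt ?VV"
    using e1 by (meson real_le_lsqrt real_sqrt_ge_zero add_nonneg_nonneg real_sqrt_le_iff order_trans)
  then show ?thesis by (simp add: mmd_def)
qed

lemma B_diff:
  assumes "PS P" "PS P'" "w \<in> space S"
  shows "\<bar>(\<integral>x. \<kappa> x w \<partial>P) - (\<integral>x. \<kappa> x w \<partial>P')\<bar> \<le> mmd \<kappa> P P'"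
proof -
  have R: "PS (return S w)" by (rule PS_return[OF assms(3)])
  note cs = cs4(1)[OF assms(1,2) R R, where aA=1 and aB="-1" and bA=1 and bB=0]
    cs4(2)[OF assms(1,2) R R, where aA=1 and aB="-1"] cs4(3)[OF assms(1,2) R R, where bA=1 and bB=0]
  have setsP: "sets P = sets S" "sets P' = sets S" using assms by (auto simp: PS_def)
  have g: "Gk \<kappa> P (return S w) = (\<integral>x. \<kappa> x w \<partial>P)" "Gk \<kappa> P' (return S w) = (\<integral>x. \<kappa> x w \<partial>P')"
    by (rule Gk_ret_r[OF setsP(1) assms(3)], rule Gk_ret_r[OF setsP(2) assms(3)])
  have gg: "Gk \<kappa> (return S w) (return S w) = \<kappa> w w"
    using Gk_ret_l[OF R assms(3)] integral_return[OF assms(3) slice2_meas[OF _ assms(3)]] by simp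
  let ?UU = "mmd2 \<kappa> P P'" and ?W = "(\<integral>x. \<kappa> x w \<partial>P) - (\<integral>x. \<kappa> x w \<partial>P')"
  have e1: "?W^2 \<le> ?UU * \<kappa> w w" "0 \<le> ?UU" "0 \<le> \<kappa> w w"
    using cs Gk_sym[OF assms(1) assms(2)] g gg by (simp_all add: mmd2_Gk algebra_simps)
  have "\<kappa> w w \<le> 1" using bnd[OF assms(3) assms(3)] by simp
  then have "?UU * \<kappa> w w \<le> ?UU" using e1 by (simp add: mult_left_le)
  then have "?W^2 \<le> ?UU" using e1 by simp
  then have "sqrt (?W^2) \<le> sqrt ?UU" by (rule real_sqrt_le_mono)
  then show ?thesis by (simp add: mmd_def)
qed


lemma mmd_self: "mmd \<kappa> P P = 0"
  by (simp add: mmd_def mmd2_Gk)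

lemma Gk_ret_rr:
  assumes "w \<in> space S"
  shows "Gk \<kappa> (return S w) (return S w) = \<kappa> w w"
  using Gk_ret_l[OF PS_return[OF assms] assms] integral_return[OF assms slice2_meas[OF _ assms]] by simp

lemma mmd_dirac:
  assumes P: "PS P" and w: "w \<in> space S"
  shows "(mmd \<kappa> P (return S w))^2 = Gk \<kappa> P P - 2 * (\<integral>y. \<kappa> w y \<partial>P) + \<kappa> w w"
proof -
  have R: "PS (return S w)" by (rule PS_return[OF w])
  have "(mmd \<kappa> P (return S w))^2 = Gk \<kappa> P P - 2 * Gk \<kappa> P (return S w) + Gk \<kappa> (return S w) (return S w)"
    by (simp add: mmd_sq[OF P R] mmd2_Gk)
  also have "Gk \<kappa> P (return S w) = (\<integral>y. \<kappa> w y \<partial>P)"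
    using Gk_sym[OF P R] Gk_ret_l[OF P w] by simp
  also have "Gk \<kappa> (return S w) (return S w) = \<kappa> w w" by (rule Gk_ret_rr[OF w])
  finally show ?thesis .
qed

lemma B_diff':
  assumes P: "PS P" "PS P'" and w: "w \<in> space S"
  shows "\<bar>(\<integral>y. \<kappa> w y \<partial>P) - (\<integral>y. \<kappa> w y \<partial>P')\<bar> \<le> mmd \<kappa> P P'"
proof -
  have "(\<integral>y. \<kappa> w y \<partial>Q) = (\<integral>x. \<kappa> x w \<partial>Q)" if "PS Q" for Q
    by (rule Bochner_Integration.integral_cong[OF refl]) (use that w in \<open>auto simp: PS_space intro!: sym\<close>)
  then show ?thesis using B_diff[OF P w] P by simp
qed

end

lemma slln:
  fixes g :: "'z \<Rightarrow> real" and Z :: "nat \<Rightarrow> 'w \<Rightarrow> 'z"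
  assumes \<Omega>: "prob_space \<Omega>"
    and iid: "prob_space.indep_vars \<Omega> (\<lambda>_. N) Z UNIV"
    and law: "\<And>i. distr \<Omega> N (Z i) = PN"
    and gm: "g \<in> borel_measurable N" and gb: "\<And>z. \<bar>g z\<bar> \<le> B"
  shows "AE \<omega> in \<Omega>. (\<lambda>n. (\<Sum>i<n. g (Z i \<omega>)) / real n) \<longlonglongrightarrow> (\<integral>z. g z \<partial>PN)"
proof -
  interpret prob_space \<Omega> by fact
  define B' where "B' = \<bar>B\<bar> + 1"
  have B'pos: "0 < B'" by (simp add: B'_def)
  define X where "X = (\<lambda>i \<omega>. g (Z i \<omega>))"
  define \<mu> where "\<mu> = (\<integral>z. g z \<partial>PN)"
  have Zm: "Z i \<in> \<Omega> \<rightarrow>\<^sub>M N" for i using iid unfolding indep_vars_def by auto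
  have Xm: "X i \<in> borel_measurable \<Omega>" for i
    unfolding X_def using measurable_comp[OF Zm gm] by (simp add: comp_def)
  have indX: "indep_vars (\<lambda>_. borel) X UNIV"
    using indep_vars_compose[OF iid, of "\<lambda>_. g" "\<lambda>_. borel"] gm by (simp add: X_def comp_def)
  have distrX: "distr \<Omega> borel (X i) = distr PN borel g" for i
  proof -
    have "distr \<Omega> borel (X i) = distr (distr \<Omega> N (Z i)) borel g"
      unfolding X_def using distr_distr[OF gm Zm] by (simp add: comp_def)
    then show ?thesis by (simp add: law)
  qed
  have EX: "expectation (X 0) = \<mu>"
  proof -
    have "expectation (X 0) = (\<integral>z. g z \<partial>distr \<Omega> N (Z 0))"
      unfolding X_def by (rule integral_distr[symmetric, OF Zm gm])
    then show ?thesis by (simp add: law \<mu>_def)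
  qed
  have tail: "AE \<omega> in \<Omega>. eventually (\<lambda>n. \<bar>(\<Sum>i<Suc n. X i \<omega>) / real (Suc n) - \<mu>\<bar> < \<epsilon>) sequentially"
    if \<epsilon>: "\<epsilon> > 0" for \<epsilon>
  proof -
    define A where "A = (\<lambda>n. {\<omega>\<in>space \<Omega>. \<bar>(\<Sum>i<Suc n. X i \<omega>) / real (Suc n) - \<mu>\<bar> \<ge> \<epsilon>})"
    define c where "c = 2 * \<epsilon>^2 / (B' - (-B'))^2"
    have cpos: "c > 0" unfolding c_def using \<epsilon> B'pos by simp
    have Am: "A n \<in> sets \<Omega>" for n unfolding A_def using Xm by measurable
    have Ab: "measure \<Omega> (A n) \<le> 2 * exp (- c) ^ Suc n" for n
    proof -
      interpret H: Hoeffding_ineq_iid \<Omega> "{..<Suc n}" X "X 0" "-B'" B' "expectation (X 0)"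
      proof unfold_locales
        show "indep_vars (\<lambda>_. borel) X {..<Suc n}" by (rule indep_vars_subset[OF indX]) simp
        show "distr \<Omega> borel (X i) = distr \<Omega> borel (X 0)" for i by (simp add: distrX)
        show "random_variable borel (X 0)" by (rule Xm)
        show "AE x in \<Omega>. X 0 x \<in> {- B'..B'}"
        proof (intro AE_I2)
          fix x
          have "\<bar>g (Z 0 x)\<bar> \<le> B" by (rule gb)
          then show "X 0 x \<in> {- B'..B'}" unfolding X_def B'_def by auto
        qed
      qed simp_all
      have h: "prob {x\<in>space \<Omega>. \<bar>(\<Sum>i\<in>{..<Suc n}. X i x) / real (card {..<Suc n}) - expectation (X 0)\<bar> \<ge> \<epsilon>}
          \<le> 2 * exp (-2 * real (card {..<Suc n}) * \<epsilon>\<^sup>2 / (B' - - B')\<^sup>2)"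
        by (rule H.Hoeffding_ineq_abs_ge') (use \<epsilon> B'pos in auto)
      have "A n = {x\<in>space \<Omega>. \<bar>(\<Sum>i\<in>{..<Suc n}. X i x) / real (card {..<Suc n}) - expectation (X 0)\<bar> \<ge> \<epsilon>}"
        unfolding A_def EX card_lessThan ..
      with h have m: "measure \<Omega> (A n) \<le> 2 * exp (-2 * real (Suc n) * \<epsilon>\<^sup>2 / (B' - - B')\<^sup>2)"
        by (simp only: card_lessThan)
      have e: "-2 * real (Suc n) * \<epsilon>\<^sup>2 / (B' - - B')\<^sup>2 = real (Suc n) * (- c)"
        using B'pos unfolding c_def by (simp add: field_simps power2_eq_square)
      have "measure \<Omega> (A n) \<le> 2 * exp (real (Suc n) * (- c))" using m unfolding e .
      also have "\<dots> = 2 * exp (- c) ^ Suc n" by (simp only: exp_of_nat_mult)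
      finally show ?thesis .
    qed
    have sg: "summable (\<lambda>n. 2 * exp (- c) ^ Suc n)"
      using cpos by (intro summable_mult) (simp add: summable_geometric_iff)
    have "summable (\<lambda>n. measure \<Omega> (A n))"
      by (rule summable_comparison_test'[OF sg, of 0]) (use Ab in simp)
    then have "AE \<omega> in \<Omega>. eventually (\<lambda>n. \<omega> \<in> space \<Omega> - A n) sequentially"
      by (intro borel_cantelli_AE1 Am) (simp_all add: emeasure_finite less_top[symmetric])
    then show ?thesis
      by (rule AE_mp) (intro AE_I2 impI, auto elim!: eventually_mono simp: A_def not_le)
  qed
  have "AE \<omega> in \<Omega>. \<forall>j::nat. eventually (\<lambda>n. \<bar>(\<Sum>i<Suc n. X i \<omega>) / real (Suc n) - \<mu>\<bar> < 1 / real (Suc j)) sequentially"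
    unfolding AE_all_countable by (intro allI tail) simp
  then show ?thesis
  proof (rule AE_mp, intro AE_I2 impI)
    fix \<omega> assume H: "\<forall>j::nat. eventually (\<lambda>n. \<bar>(\<Sum>i<Suc n. X i \<omega>) / real (Suc n) - \<mu>\<bar> < 1 / real (Suc j)) sequentially"
    have "(\<lambda>n. (\<Sum>i<Suc n. g (Z i \<omega>)) / real (Suc n)) \<longlonglongrightarrow> \<mu>"
    proof (rule LIMSEQ_I)
      fix r :: real assume r: "0 < r"
      obtain j :: nat where j: "1 / real (Suc j) < r"
        using r by (metis nat_approx_posE of_nat_Suc)
      from H[rule_format, of j] obtain no where no: "\<And>n. n \<ge> no \<Longrightarrow> \<bar>(\<Sum>i<Suc n. X i \<omega>) / real (Suc n) - \<mu>\<bar> < 1 / real (Suc j)"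
        unfolding eventually_sequentially by blast
      show "\<exists>no. \<forall>n\<ge>no. norm ((\<Sum>i<Suc n. g (Z i \<omega>)) / real (Suc n) - \<mu>) < r"
      proof (intro exI allI impI)
        fix n assume "no \<le> n"
        from no[OF this] j have "\<bar>(\<Sum>i<Suc n. X i \<omega>) / real (Suc n) - \<mu>\<bar> < r" by linarith
        then show "norm ((\<Sum>i<Suc n. g (Z i \<omega>)) / real (Suc n) - \<mu>) < r" by (simp only: X_def real_norm_def)
      qed
    qed
    then show "(\<lambda>n. (\<Sum>i<n. g (Z i \<omega>)) / real n) \<longlonglongrightarrow> (\<integral>z. g z \<partial>PN)"
      unfolding \<mu>_def by (rule LIMSEQ_imp_Suc)
  qed
qed


lemma space_Xspace: "space (Xspace :: ('d \<Rightarrow> real) measure) = UNIV"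
  by (simp add: Xspace_def space_PiM PiE_UNIV_domain)

lemma space_XMspace: "space (XMspace :: (('d \<Rightarrow> real) \<times> ('d \<Rightarrow> bool)) measure) = UNIV"
  by (simp add: XMspace_def space_pair_measure space_Xspace Mspace_def)

lemma subvec_meas: "subvec m \<in> Xspace \<rightarrow>\<^sub>M Ospace m"
  unfolding subvec_def Xspace_def Ospace_def by (rule measurable_restrict_subset) simp

lemma subvec_space: "subvec m x \<in> space (Ospace m)"
  by (simp add: subvec_def Ospace_def space_PiM)

lemma sv_meas: "(\<lambda>z. subvec m (fst z)) \<in> XMspace \<rightarrow>\<^sub>M Ospace m"
proof -
  have "fst \<in> XMspace \<rightarrow>\<^sub>M Xspace" unfolding XMspace_def by (rule measurable_fst)
  from measurable_comp[OF this subvec_meas] show ?thesis by (simp add: comp_def)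
qed

lemma marg_sets: "sets (marg m Q) = sets (Ospace m)"
  by (simp add: marg_def)

lemma marg_prob:
  assumes "prob_space Q" "sets Q = sets Xspace"
  shows "prob_space (marg m Q)"
proof -
  have "subvec m \<in> Q \<rightarrow>\<^sub>M Ospace m" unfolding measurable_cong_sets[OF assms(2) refl] by (rule subvec_meas)
  then show ?thesis unfolding marg_def by (rule prob_space.prob_space_distr[OF assms(1)])
qed

lemma A_sets: "UNIV \<times> {m} \<in> sets XMspace"
proof -
  have "space Xspace \<times> {m} \<in> sets (Xspace \<Otimes>\<^sub>M Mspace)"
    by (rule pair_measureI) (auto simp: Mspace_def)
  then show ?thesis by (simp add: XMspace_def space_Xspace)
qed

lemma condX_prob:
  assumes PXM: "prob_space PXM" "sets PXM = sets XMspace" and p: "probM PXM m > 0"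
  shows "prob_space (condX PXM m)" "sets (condX PXM m) = sets Xspace"
proof -
  interpret prob_space PXM by fact
  have As: "UNIV \<times> {m} \<in> sets PXM" using A_sets PXM(2) by auto
  have U: "prob_space (uniform_measure PXM (UNIV \<times> {m}))"
    using p As by (intro prob_space_uniform_measure) (auto simp: probM_def emeasure_eq_measure)
  have "fst \<in> uniform_measure PXM (UNIV \<times> {m}) \<rightarrow>\<^sub>M Xspace"
    unfolding measurable_cong_sets[OF sets_uniform_measure refl] measurable_cong_sets[OF PXM(2) refl]
    unfolding XMspace_def by (rule measurable_fst)
  then show "prob_space (condX PXM m)" unfolding condX_def by (rule prob_space.prob_space_distr[OF U])
  show "sets (condX PXM m) = sets Xspace" by (simp add: condX_def)
qed

lemma cond_integral:
  fixes h :: "('d \<Rightarrow> real) \<Rightarrow> real"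
  assumes PXM: "prob_space PXM" "sets PXM = sets XMspace" and p: "probM PXM m > 0"
    and hm: "h \<in> borel_measurable (Ospace m)"
  shows "(\<integral>z. indicator (UNIV \<times> {m}) z * h (subvec m (fst z)) \<partial>PXM)
       = probM PXM m * (\<integral>w. h w \<partial>marg m (condX PXM m))"
proof -
  interpret prob_space PXM by fact
  define A where "A = (UNIV :: ('d \<Rightarrow> real) set) \<times> {m}"
  define pm where "pm = probM PXM m"
  have As: "A \<in> sets PXM" using A_sets PXM(2) by (auto simp: A_def)
  have pmA: "measure PXM A = pm" by (simp add: A_def pm_def probM_def)
  have fstm: "fst \<in> PXM \<rightarrow>\<^sub>M Xspace"
    unfolding measurable_cong_sets[OF PXM(2) refl] unfolding XMspace_def by (rule measurable_fst)
  have svm: "(\<lambda>z. subvec m (fst z)) \<in> PXM \<rightarrow>\<^sub>M Ospace m"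
    unfolding measurable_cong_sets[OF PXM(2) refl] by (rule sv_meas)
  have hsv: "(\<lambda>z. h (subvec m (fst z))) \<in> borel_measurable PXM"
    using measurable_comp[OF svm hm] by (simp add: comp_def)
  have U: "uniform_measure PXM A = density PXM (\<lambda>z. ennreal (indicator A z / pm))"
    unfolding uniform_measure_def
  proof (rule density_cong)
    show "(\<lambda>x. indicator A x / emeasure PXM A) \<in> borel_measurable PXM" using As by measurable
    show "(\<lambda>z. ennreal (indicator A z / pm)) \<in> borel_measurable PXM" using As by measurable
    show "AE x in PXM. indicator A x / emeasure PXM A = ennreal (indicator A x / pm)"
    proof (rule AE_I2)
      fix x
      have "emeasure PXM A = ennreal pm" using pmA by (simp add: emeasure_eq_measure)
      then show "indicator A x / emeasure PXM A = ennreal (indicator A x / pm)"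
        using p by (simp add: pm_def divide_ennreal[symmetric] ennreal_indicator)
    qed
  qed
  have "(\<integral>w. h w \<partial>marg m (condX PXM m)) = (\<integral>x. h (subvec m x) \<partial>condX PXM m)"
    unfolding marg_def
  proof (rule integral_distr)
    show "subvec m \<in> condX PXM m \<rightarrow>\<^sub>M Ospace m"
      unfolding measurable_cong_sets[OF condX_prob(2)[OF PXM p] refl] by (rule subvec_meas)
  qed (rule hm)
  also have "\<dots> = (\<integral>z. h (subvec m (fst z)) \<partial>uniform_measure PXM A)"
    unfolding condX_def A_def
  proof (rule integral_distr)
    show "fst \<in> uniform_measure PXM (UNIV \<times> {m}) \<rightarrow>\<^sub>M Xspace"
      unfolding measurable_cong_sets[OF sets_uniform_measure refl] by (rule fstm)
    show "(\<lambda>x. h (subvec m x)) \<in> borel_measurable Xspace"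
      using measurable_comp[OF subvec_meas hm] by (simp add: comp_def)
  qed
  also have "\<dots> = (\<integral>z. (indicator A z / pm) * h (subvec m (fst z)) \<partial>PXM)"
    unfolding U by (subst integral_density) (use hsv As p in \<open>auto simp: pm_def\<close>)
  also have "\<dots> = (1 / pm) * (\<integral>z. indicator A z * h (subvec m (fst z)) \<partial>PXM)"
    by (simp add: integral_mult_right_zero[symmetric] mult.assoc)
  finally show ?thesis using p unfolding A_def pm_def by (simp add: field_simps)
qed


lemma argmin_consistent:
  fixes \<Theta> :: "'p::metric_space set" and L :: "'p \<Rightarrow> real" and E :: "nat \<Rightarrow> 'p \<Rightarrow> real"
  assumes cpt: "compact \<Theta>" and cont: "continuous_on \<Theta> L" and t0: "\<theta>0 \<in> \<Theta>"
    and uniq: "\<And>\<theta>. \<theta> \<in> \<Theta> \<Longrightarrow> \<theta> \<noteq> \<theta>0 \<Longrightarrow> L \<theta>0 < L \<theta>"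
    and tin: "\<And>n. t n \<in> \<Theta>" and tmin: "\<And>n \<theta>. \<theta> \<in> \<Theta> \<Longrightarrow> E n (t n) \<le> E n \<theta>"
    and unif: "\<And>\<epsilon>. \<epsilon> > 0 \<Longrightarrow> eventually (\<lambda>n. \<forall>\<theta>\<in>\<Theta>. \<bar>E n \<theta> - L \<theta>\<bar> \<le> \<epsilon>) sequentially"
  shows "t \<longlonglongrightarrow> \<theta>0"
proof (rule tendstoI)
  fix \<epsilon> :: real assume \<epsilon>: "\<epsilon> > 0"
  define K where "K = \<Theta> - ball \<theta>0 \<epsilon>"
  show "eventually (\<lambda>n. dist (t n) \<theta>0 < \<epsilon>) sequentially"
  proof (cases "K = {}")
    case True
    then have "t n \<in> ball \<theta>0 \<epsilon>" for n using tin[of n] unfolding K_def by blast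
    then show ?thesis by (simp add: dist_commute)
  next
    case False
    have cK: "compact K" unfolding K_def using cpt by (intro compact_diff) auto
    obtain \<theta>s where \<theta>s: "\<theta>s \<in> K" "\<And>y. y \<in> K \<Longrightarrow> L \<theta>s \<le> L y"
      using continuous_attains_inf[OF cK False continuous_on_subset[OF cont]] unfolding K_def by blast
    have "\<theta>s \<noteq> \<theta>0" using \<theta>s(1) \<epsilon> unfolding K_def by auto
    then have lt: "L \<theta>0 < L \<theta>s" using uniq \<theta>s(1) unfolding K_def by blast
    define \<delta> where "\<delta> = L \<theta>s - L \<theta>0"
    have \<delta>: "\<delta> > 0" using lt by (simp add: \<delta>_def)
    from unif[of "\<delta>/3"] \<delta> have ev: "eventually (\<lambda>n. \<forall>\<theta>\<in>\<Theta>. \<bar>E n \<theta> - L \<theta>\<bar> \<le> \<delta>/3) sequentially" by simp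
    show ?thesis
    proof (rule eventually_mono[OF ev])
      fix n assume H: "\<forall>\<theta>\<in>\<Theta>. \<bar>E n \<theta> - L \<theta>\<bar> \<le> \<delta>/3"
      have h1: "\<bar>E n (t n) - L (t n)\<bar> \<le> \<delta>/3" using H tin[of n] by blast
      have h2: "\<bar>E n \<theta>0 - L \<theta>0\<bar> \<le> \<delta>/3" using H t0 by blast
      have "L (t n) \<le> E n (t n) + \<delta>/3" using h1 by linarith
      also have "\<dots> \<le> E n \<theta>0 + \<delta>/3" using tmin[OF t0, of n] by simp
      also have "\<dots> \<le> L \<theta>0 + 2 * \<delta>/3" using h2 by linarith
      also have "\<dots> < L \<theta>s" unfolding \<delta>_def using lt by (simp add: field_simps)
      finally have "L (t n) < L \<theta>s" .
      then have "t n \<notin> K" using \<theta>s(2) by (meson not_le)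
      then show "dist (t n) \<theta>0 < \<epsilon>" using tin[of n] unfolding K_def by (simp add: dist_commute)
    qed
  qed
qed

lemma finite_net:
  fixes \<Theta> :: "'p::metric_space set" and d :: "'p \<Rightarrow> 'p \<Rightarrow> real"
  assumes cpt: "compact \<Theta>" and d0: "\<And>\<theta>. \<theta> \<in> \<Theta> \<Longrightarrow> d \<theta> \<theta> = 0"
    and dc: "\<And>\<theta>'. \<theta>' \<in> \<Theta> \<Longrightarrow> ((\<lambda>\<theta>. d \<theta> \<theta>') \<longlongrightarrow> 0) (at \<theta>' within \<Theta>)"
    and \<epsilon>: "\<epsilon> > 0"
  shows "\<exists>F. finite F \<and> F \<subseteq> \<Theta> \<and> (\<forall>\<theta>\<in>\<Theta>. \<exists>\<theta>'\<in>F. \<bar>d \<theta> \<theta>'\<bar> < \<epsilon>)"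
proof -
  have "\<exists>\<delta>>0. \<forall>\<theta>\<in>\<Theta>. dist \<theta> \<theta>' < \<delta> \<longrightarrow> \<bar>d \<theta> \<theta>'\<bar> < \<epsilon>" if "\<theta>' \<in> \<Theta>" for \<theta>'
  proof -
    have "eventually (\<lambda>\<theta>. dist (d \<theta> \<theta>') 0 < \<epsilon>) (at \<theta>' within \<Theta>)"
      by (rule tendstoD[OF dc[OF that] \<epsilon>])
    then obtain \<delta> where \<delta>: "\<delta> > 0" "\<And>\<theta>. \<theta> \<in> \<Theta> \<Longrightarrow> \<theta> \<noteq> \<theta>' \<Longrightarrow> dist \<theta> \<theta>' < \<delta> \<Longrightarrow> dist (d \<theta> \<theta>') 0 < \<epsilon>"
      unfolding eventually_at by blast
    show ?thesis
    proof (intro exI[of _ \<delta>] conjI ballI impI)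
      fix \<theta> assume th: "\<theta> \<in> \<Theta>" "dist \<theta> \<theta>' < \<delta>"
      show "\<bar>d \<theta> \<theta>'\<bar> < \<epsilon>"
      proof (cases "\<theta> = \<theta>'")
        case True then show ?thesis using d0[OF that] \<epsilon> by simp
      next
        case False then show ?thesis using \<delta>(2)[OF th(1) False th(2)] by (simp add: dist_real_def)
      qed
    qed (rule \<delta>(1))
  qed
  then obtain \<delta> where \<delta>: "\<And>\<theta>'. \<theta>' \<in> \<Theta> \<Longrightarrow> \<delta> \<theta>' > 0"
    "\<And>\<theta>' \<theta>. \<theta>' \<in> \<Theta> \<Longrightarrow> \<theta> \<in> \<Theta> \<Longrightarrow> dist \<theta> \<theta>' < \<delta> \<theta>' \<Longrightarrow> \<bar>d \<theta> \<theta>'\<bar> < \<epsilon>"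
    by metis
  have cov: "\<Theta> \<subseteq> (\<Union>\<theta>'\<in>\<Theta>. ball \<theta>' (\<delta> \<theta>'))"
    using \<delta>(1) by auto
  obtain F where F: "F \<subseteq> \<Theta>" "finite F" "\<Theta> \<subseteq> (\<Union>\<theta>'\<in>F. ball \<theta>' (\<delta> \<theta>'))"
    using compactE_image[OF cpt _ cov] by blast
  show ?thesis
  proof (intro exI conjI ballI)
    fix \<theta> assume "\<theta> \<in> \<Theta>"
    then obtain \<theta>' where "\<theta>' \<in> F" "\<theta> \<in> ball \<theta>' (\<delta> \<theta>')" using F(3) by blast
    then show "\<exists>\<theta>'\<in>F. \<bar>d \<theta> \<theta>'\<bar> < \<epsilon>" using \<delta>(2) F(1) \<open>\<theta> \<in> \<Theta>\<close> by (auto simp: dist_commute)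
  qed (use F in auto)
qed

lemma uniform_from_net:
  fixes aB :: "'p \<Rightarrow> nat \<Rightarrow> real" and eB :: "'p \<Rightarrow> real" and F :: "nat \<Rightarrow> 'p set"
  assumes fin: "\<And>j. finite (F j)"
    and conv: "\<And>j \<theta>. \<theta> \<in> F j \<Longrightarrow> (\<lambda>n. aB \<theta> n) \<longlonglongrightarrow> eB \<theta>"
    and close: "\<And>j \<theta>. \<theta> \<in> \<Theta> \<Longrightarrow> \<exists>\<theta>'\<in>F j. (\<forall>n. \<bar>aB \<theta> n - aB \<theta>' n\<bar> \<le> 1 / real (Suc j)) \<and> \<bar>eB \<theta> - eB \<theta>'\<bar> \<le> 1 / real (Suc j)"
    and \<epsilon>: "\<epsilon> > 0"
  shows "eventually (\<lambda>n. \<forall>\<theta>\<in>\<Theta>. \<bar>aB \<theta> n - eB \<theta>\<bar> \<le> \<epsilon>) sequentially"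
proof -
  obtain j :: nat where j: "1 / real (Suc j) < \<epsilon> / 3"
    using \<epsilon> by (metis nat_approx_posE of_nat_Suc zero_less_divide_iff zero_less_numeral)
  have "eventually (\<lambda>n. \<forall>\<theta>'\<in>F j. \<bar>aB \<theta>' n - eB \<theta>'\<bar> < \<epsilon> / 3) sequentially"
  proof (rule eventually_ball_finite[OF fin], rule ballI)
    fix \<theta>' assume "\<theta>' \<in> F j"
    from conv[OF this] \<epsilon> have "eventually (\<lambda>n. dist (aB \<theta>' n) (eB \<theta>') < \<epsilon> / 3) sequentially"
      by (intro tendstoD) auto
    then show "eventually (\<lambda>n. \<bar>aB \<theta>' n - eB \<theta>'\<bar> < \<epsilon> / 3) sequentially" by (simp add: dist_real_def)
  qed
  then show ?thesis
  proof (rule eventually_mono, intro ballI)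
    fix n \<theta> assume H: "\<forall>\<theta>'\<in>F j. \<bar>aB \<theta>' n - eB \<theta>'\<bar> < \<epsilon> / 3" and th: "\<theta> \<in> \<Theta>"
    obtain \<theta>' where t': "\<theta>' \<in> F j" "\<And>n. \<bar>aB \<theta> n - aB \<theta>' n\<bar> \<le> 1 / real (Suc j)" "\<bar>eB \<theta> - eB \<theta>'\<bar> \<le> 1 / real (Suc j)"
      using close[OF th, of j] by blast
    have "\<bar>aB \<theta>' n - eB \<theta>'\<bar> < \<epsilon> / 3" using H t'(1) by blast
    then show "\<bar>aB \<theta> n - eB \<theta>\<bar> \<le> \<epsilon>" using t'(2)[of n] t'(3) j by linarith
  qed
qed



lemma avg_diff_bound:
  fixes f f' :: "'z \<Rightarrow> real"
  assumes "\<And>z. \<bar>f z - f' z\<bar> \<le> d" "0 \<le> d"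
  shows "\<bar>(\<Sum>i<n. f (Z i)) / real n - (\<Sum>i<n. f' (Z i)) / real n\<bar> \<le> d"
proof (cases "n = 0")
  case True then show ?thesis using assms by simp
next
  case False
  have "\<bar>(\<Sum>i<n. f (Z i)) - (\<Sum>i<n. f' (Z i))\<bar> = \<bar>\<Sum>i<n. f (Z i) - f' (Z i)\<bar>"
    by (simp add: sum_subtractf)
  also have "\<dots> \<le> (\<Sum>i<n. \<bar>f (Z i) - f' (Z i)\<bar>)" by (rule sum_abs)
  also have "\<dots> \<le> (\<Sum>i<n. d)" by (intro sum_mono assms)
  also have "\<dots> = real n * d" by simp
  finally show ?thesis using False by (simp add: diff_divide_distrib[symmetric] divide_le_eq mult.commute)
qed

lemma avg_abs_bound:
  fixes f h :: "'z \<Rightarrow> real"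
  assumes "\<And>z. \<bar>f z\<bar> \<le> h z"
  shows "\<bar>(\<Sum>i<n. f (Z i)) / real n\<bar> \<le> (\<Sum>i<n. h (Z i)) / real n"
proof -
  have "\<bar>\<Sum>i<n. f (Z i)\<bar> \<le> (\<Sum>i<n. \<bar>f (Z i)\<bar>)" by (rule sum_abs)
  also have "\<dots> \<le> (\<Sum>i<n. h (Z i))" by (intro sum_mono assms)
  finally show ?thesis by (simp add: divide_right_mono)
qed

lemma int_diff_bound:
  fixes f f' :: "'z \<Rightarrow> real"
  assumes "prob_space M" "integrable M f" "integrable M f'" "\<And>z. \<bar>f z - f' z\<bar> \<le> d"
  shows "\<bar>(\<integral>z. f z \<partial>M) - (\<integral>z. f' z \<partial>M)\<bar> \<le> d"
proof -
  interpret prob_space M by fact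
  have "\<bar>(\<integral>z. f z \<partial>M) - (\<integral>z. f' z \<partial>M)\<bar> = \<bar>\<integral>z. f z - f' z \<partial>M\<bar>"
    using assms by simp
  also have "\<dots> \<le> (\<integral>z. \<bar>f z - f' z\<bar> \<partial>M)" by (rule integral_abs_bound)
  also have "\<dots> \<le> (\<integral>z. d \<partial>M)"
    by (rule integral_mono) (use assms in auto)
  finally show ?thesis by (simp add: prob_space)
qed

lemma abs_int_bound:
  fixes f g :: "'a \<Rightarrow> real"
  assumes "integrable M f" "integrable M g" "\<And>x. x \<in> space M \<Longrightarrow> \<bar>f x\<bar> \<le> g x"
  shows "\<bar>\<integral>x. f x \<partial>M\<bar> \<le> (\<integral>x. g x \<partial>M)"
proof -
  have "\<bar>\<integral>x. f x \<partial>M\<bar> \<le> (\<integral>x. \<bar>f x\<bar> \<partial>M)" by (rule integral_abs_bound)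
  also have "\<dots> \<le> (\<integral>x. g x \<partial>M)" by (rule integral_mono) (use assms in auto)
  finally show ?thesis .
qed

lemma abs3:
  fixes X a b c e :: real
  assumes "X = a - 2 * b + c" "\<bar>c\<bar> < e / 4" "\<bar>b\<bar> \<le> e / 4" "\<bar>a\<bar> \<le> e / 4"
  shows "\<bar>X\<bar> \<le> e"
  using assms by linarith

theorem theorem3:
  fixes \<Omega> :: "'w measure"
    and Z :: "nat \<Rightarrow> 'w \<Rightarrow> ('d::finite \<Rightarrow> real) \<times> ('d \<Rightarrow> bool)"
    and PXM :: "(('d \<Rightarrow> real) \<times> ('d \<Rightarrow> bool)) measure"
    and k :: "'d set \<Rightarrow> ('d \<Rightarrow> real) \<Rightarrow> ('d \<Rightarrow> real) \<Rightarrow> real"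
    and P :: "'p::metric_space \<Rightarrow> ('d \<Rightarrow> real) measure"
    and \<Theta> :: "'p set"
    and \<theta>n :: "nat \<Rightarrow> 'w \<Rightarrow> 'p"
    and \<theta>inf :: 'p
  assumes \<Omega>: "prob_space \<Omega>"
    and PXM: "prob_space PXM" "sets PXM = sets XMspace"
    and iid: "prob_space.indep_vars \<Omega> (\<lambda>_. XMspace) Z UNIV"
    and law: "\<And>i. distr \<Omega> XMspace (Z i) = PXM"
    and kernel: "\<And>S. good_kernel_on (PiM S (\<lambda>_. borel)) (k S)"
    and model: "\<And>\<theta>. \<theta> \<in> \<Theta> \<Longrightarrow> prob_space (P \<theta>) \<and> sets (P \<theta>) = sets Xspace"
    and estimator: "\<And>n \<omega>. \<theta>n n \<omega> \<in> \<Theta> \<and>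
         (\<forall>\<theta>\<in>\<Theta>. emp_risk k P (\<lambda>i. Z i \<omega>) n (\<theta>n n \<omega>) \<le> emp_risk k P (\<lambda>i. Z i \<omega>) n \<theta>)"
    and compact: "compact \<Theta>"
    and unique_min: "\<theta>inf \<in> \<Theta>"
      "\<And>\<theta>. \<theta> \<in> \<Theta> \<Longrightarrow> \<theta> \<noteq> \<theta>inf \<Longrightarrow> pop_risk k P PXM \<theta>inf < pop_risk k P PXM \<theta>"
    and cont: "\<And>m \<theta>. probM PXM m > 0 \<Longrightarrow> \<theta> \<in> \<Theta> \<Longrightarrow>
         ((\<lambda>\<theta>'. mmd (k (obs m)) (marg m (P \<theta>')) (marg m (P \<theta>))) \<longlongrightarrow> 0) (at \<theta> within \<Theta>)"
  shows "AE \<omega> in \<Omega>. (\<lambda>n. \<theta>n n \<omega>) \<longlonglongrightarrow> \<theta>inf"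
proof -
  interpret PO: prob_space \<Omega> by fact
  interpret PX: prob_space PXM by fact
  define e where "e = (empty_pattern :: 'd \<Rightarrow> bool)"
  define Ms where "Ms = (UNIV :: ('d \<Rightarrow> bool) set) - {e}"
  have finMs: "finite Ms" unfolding Ms_def by simp
  define \<kappa> where "\<kappa> = (\<lambda>m::'d \<Rightarrow> bool. k (obs m))"
  define S where "S = (\<lambda>m::'d \<Rightarrow> bool. Ospace m)"
  have gkm: "gk (S m) (\<kappa> m)" for m
    unfolding gk_def S_def \<kappa>_def Ospace_def by (rule kernel)
  define Pm where "Pm = (\<lambda>m \<theta>. marg m (P \<theta>))"
  have PSP: "gk.PS (S m) (Pm m \<theta>)" if "\<theta> \<in> \<Theta>" for m \<theta>
    unfolding gk.PS_def[OF gkm] unfolding Pm_def S_def using model[OF that]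
    by (simp add: marg_prob marg_sets)
  define pm where "pm = (\<lambda>m. probM PXM m)"
  have pm_nonneg: "pm m \<ge> 0" for m by (simp add: pm_def probM_def)
  define Cm where "Cm = (\<lambda>m. marg m (condX PXM m))"
  have PSC: "gk.PS (S m) (Cm m)" if "pm m > 0" for m
    unfolding gk.PS_def[OF gkm] unfolding Cm_def S_def using condX_prob[OF PXM that[unfolded pm_def]]
    by (simp add: marg_prob marg_sets)
  define A where "A = (\<lambda>m \<theta>. Gk (\<kappa> m) (Pm m \<theta>) (Pm m \<theta>))"
  define B where "B = (\<lambda>m \<theta> w. \<integral>y. \<kappa> m w y \<partial>(Pm m \<theta>))"
  define D where "D = (\<lambda>m w. \<kappa> m w w)"
  define sv where "sv = (\<lambda>m (z :: ('d \<Rightarrow> real) \<times> ('d \<Rightarrow> bool)). subvec m (fst z))"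
  define I where "I = (\<lambda>(m::'d \<Rightarrow> bool) (z::('d \<Rightarrow> real) \<times> ('d \<Rightarrow> bool)). indicator ((UNIV :: ('d \<Rightarrow> real) set) \<times> {m}) z :: real)"
  define JB where "JB = (\<lambda>m \<theta> z. I m z * B m \<theta> (sv m z))"
  define JD where "JD = (\<lambda>m z. I m z * D m (sv m z))"
  define g where "g = (\<lambda>m \<theta> z. A m \<theta> * I m z - 2 * JB m \<theta> z + JD m z)"
  define avg where "avg = (\<lambda>(f :: ('d \<Rightarrow> real) \<times> ('d \<Rightarrow> bool) \<Rightarrow> real) n \<omega>. (\<Sum>i<n. f (Z i \<omega>)) / real n)"
  define L where "L = (\<lambda>\<theta>. \<Sum>m\<in>Ms. \<integral>z. g m \<theta> z \<partial>PXM)"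

  have svS: "sv m z \<in> space (S m)" for m z unfolding sv_def S_def by (rule subvec_space)
  have svm: "sv m \<in> XMspace \<rightarrow>\<^sub>M S m" for m unfolding sv_def S_def by (rule sv_meas)
  have Im: "I m \<in> borel_measurable XMspace" for m
    unfolding I_def using A_sets by measurable
  have Ib: "0 \<le> I m z" "I m z \<le> 1" for m z by (auto simp: I_def)
  have Ival: "I m z = (if snd z = m then 1 else 0)" for m z by (cases z) (auto simp: I_def indicator_def)
  have Bm: "B m \<theta> \<in> borel_measurable (S m)" if "\<theta> \<in> \<Theta>" for m \<theta>
    unfolding B_def by (rule gk.inner_meas[OF gkm PSP[OF that] refl])
  have Bb: "\<bar>B m \<theta> w\<bar> \<le> 1" if "\<theta> \<in> \<Theta>" "w \<in> space (S m)" for m \<theta> w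
    unfolding B_def by (rule gk.inner_bnd[OF gkm PSP[OF that(1)] that(2)])
  have Dm: "D m \<in> borel_measurable (S m)" for m
  proof -
    have "(\<lambda>w. (w, w)) \<in> S m \<rightarrow>\<^sub>M S m \<Otimes>\<^sub>M S m" by measurable
    from measurable_comp[OF this gk.meas[OF gkm]] show ?thesis by (simp add: D_def comp_def)
  qed
  have Db: "\<bar>D m w\<bar> \<le> 1" if "w \<in> space (S m)" for m w
    unfolding D_def by (rule gk.bnd[OF gkm that that])
  have JBm: "JB m \<theta> \<in> borel_measurable XMspace" if "\<theta> \<in> \<Theta>" for m \<theta>
  proof -
    have "(\<lambda>z. B m \<theta> (sv m z)) \<in> borel_measurable XMspace"
      using measurable_comp[OF svm Bm[OF that]] by (simp add: comp_def)
    then show ?thesis unfolding JB_def using Im by measurable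
  qed
  have JBb: "\<bar>JB m \<theta> z\<bar> \<le> I m z" if "\<theta> \<in> \<Theta>" for m \<theta> z
    using Bb[OF that svS, of m z] Ib[of m z] by (auto simp: JB_def abs_mult Ival)
  have JDm: "JD m \<in> borel_measurable XMspace" for m
  proof -
    have "(\<lambda>z. D m (sv m z)) \<in> borel_measurable XMspace"
      using measurable_comp[OF svm Dm] by (simp add: comp_def)
    then show ?thesis unfolding JD_def using Im by measurable
  qed
  have JDb: "\<bar>JD m z\<bar> \<le> 1" for m z
    using Db[OF svS, of m z] Ib[of m z] by (auto simp: JD_def abs_mult Ival)
  have Ab: "\<bar>A m \<theta>\<bar> \<le> 1" if "\<theta> \<in> \<Theta>" for m \<theta>
    unfolding A_def by (rule gk.Gk_bnd[OF gkm PSP[OF that] PSP[OF that]])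

  have intb: "integrable PXM f" if "f \<in> borel_measurable XMspace" "\<And>z. \<bar>f z\<bar> \<le> c" for f :: "_ \<Rightarrow> real" and c :: real
  proof (rule prob_integrable_bound[OF PXM(1)])
    show "f \<in> borel_measurable PXM" unfolding measurable_cong_sets[OF PXM(2) refl] by (rule that(1))
  qed (rule that(2))
  have intI: "integrable PXM (I m)" for m
  proof -
    have Iabs: "\<bar>I m z\<bar> \<le> 1" for z using Ib[of m z] by simp
    show ?thesis by (rule intb[OF Im Iabs])
  qed
  have intJB: "integrable PXM (JB m \<theta>)" if "\<theta> \<in> \<Theta>" for m \<theta>
  proof -
    have JBabs: "\<bar>JB m \<theta> z\<bar> \<le> 1" for z using JBb[OF that, of m z] Ib[of m z] by linarith
    show ?thesis by (rule intb[OF JBm[OF that] JBabs])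
  qed
  have intJD: "integrable PXM (JD m)" for m by (rule intb[OF JDm JDb])
  have EI: "(\<integral>z. I m z \<partial>PXM) = pm m" for m
  proof -
    have "UNIV \<times> {m} \<in> sets PXM" using A_sets PXM(2) by simp
    then show ?thesis unfolding I_def pm_def probM_def
      by (simp add: PX.emeasure_eq_measure)
  qed
  have Eg: "(\<integral>z. g m \<theta> z \<partial>PXM) = A m \<theta> * pm m - 2 * (\<integral>z. JB m \<theta> z \<partial>PXM) + (\<integral>z. JD m z \<partial>PXM)"
    if "\<theta> \<in> \<Theta>" for m \<theta>
    unfolding g_def using intI intJB[OF that] intJD EI by simp
  have avg_g: "avg (g m \<theta>) n \<omega> = A m \<theta> * avg (I m) n \<omega> - 2 * avg (JB m \<theta>) n \<omega> + avg (JD m) n \<omega>" for m \<theta> n \<omega>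
    unfolding avg_def g_def
    by (simp add: sum.distrib sum_subtractf sum_distrib_left[symmetric] add_divide_distrib diff_divide_distrib)

  have tf: "(if snd z = empty_pattern then 0 else
        (mmd (k (obs (snd z))) (marg (snd z) (P \<theta>)) (return (Ospace (snd z)) (subvec (snd z) (fst z))))\<^sup>2)
      = (\<Sum>m\<in>Ms. g m \<theta> z)" if th: "\<theta> \<in> \<Theta>" for \<theta> z
  proof -
    have "(\<Sum>m\<in>Ms. g m \<theta> z) = (\<Sum>m\<in>Ms. if snd z = m then A m \<theta> - 2 * B m \<theta> (sv m z) + D m (sv m z) else 0)"
      by (intro sum.cong refl) (simp add: g_def JB_def JD_def Ival)
    also have "\<dots> = (if snd z \<in> Ms then A (snd z) \<theta> - 2 * B (snd z) \<theta> (sv (snd z) z) + D (snd z) (sv (snd z) z) else 0)"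
      by (simp add: sum.delta)
    also have "\<dots> = (if snd z = empty_pattern then 0 else
        (mmd (k (obs (snd z))) (marg (snd z) (P \<theta>)) (return (Ospace (snd z)) (subvec (snd z) (fst z))))\<^sup>2)"
    proof (cases "snd z = empty_pattern")
      case True then show ?thesis by (simp add: Ms_def e_def)
    next
      case False
      then have "snd z \<in> Ms" by (simp add: Ms_def e_def)
      moreover have "(mmd (\<kappa> (snd z)) (Pm (snd z) \<theta>) (return (S (snd z)) (sv (snd z) z)))\<^sup>2
          = A (snd z) \<theta> - 2 * B (snd z) \<theta> (sv (snd z) z) + D (snd z) (sv (snd z) z)"
        unfolding A_def B_def D_def by (rule gk.mmd_dirac[OF gkm PSP[OF th] svS])
      ultimately show ?thesis using False by (simp add: \<kappa>_def Pm_def S_def sv_def)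
    qed
    finally show ?thesis by simp
  qed
  have emp_eq: "emp_risk k P (\<lambda>i. Z i \<omega>) n \<theta> = (\<Sum>m\<in>Ms. avg (g m \<theta>) n \<omega>)" if "\<theta> \<in> \<Theta>" for \<omega> n \<theta>
  proof -
    have "emp_risk k P (\<lambda>i. Z i \<omega>) n \<theta> = (1 / real n) * (\<Sum>i<n. \<Sum>m\<in>Ms. g m \<theta> (Z i \<omega>))"
      unfolding emp_risk_def using tf[OF that] by simp
    also have "\<dots> = (\<Sum>m\<in>Ms. avg (g m \<theta>) n \<omega>)"
      unfolding avg_def by (simp add: sum.swap[of _ "{..<n}"] sum_divide_distrib)
    finally show ?thesis .
  qed

  define cst where "cst = (\<lambda>m. if pm m > 0 then (\<integral>z. JD m z \<partial>PXM) - pm m * Gk (\<kappa> m) (Cm m) (Cm m)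
                             else (\<integral>z. JD m z \<partial>PXM))"
  have Eg2: "(\<integral>z. g m \<theta> z \<partial>PXM) = pm m * (mmd (\<kappa> m) (Pm m \<theta>) (Cm m))^2 + cst m" if th: "\<theta> \<in> \<Theta>" for m \<theta>
  proof (cases "pm m > 0")
    case True
    have "(\<integral>z. JB m \<theta> z \<partial>PXM) = pm m * (\<integral>w. B m \<theta> w \<partial>Cm m)"
      unfolding JB_def I_def sv_def pm_def Cm_def
      by (rule cond_integral[OF PXM True[unfolded pm_def]]) (use Bm[OF th] in \<open>simp add: S_def\<close>)
    also have "(\<integral>w. B m \<theta> w \<partial>Cm m) = Gk (\<kappa> m) (Pm m \<theta>) (Cm m)"
      using gk.Gk_sym[OF gkm PSC[OF True] PSP[OF th]] by (simp add: Gk_def B_def)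
    finally have jb: "(\<integral>z. JB m \<theta> z \<partial>PXM) = pm m * Gk (\<kappa> m) (Pm m \<theta>) (Cm m)" .
    have mm: "(mmd (\<kappa> m) (Pm m \<theta>) (Cm m))^2 = A m \<theta> - 2 * Gk (\<kappa> m) (Pm m \<theta>) (Cm m) + Gk (\<kappa> m) (Cm m) (Cm m)"
      unfolding A_def by (simp add: gk.mmd_sq[OF gkm PSP[OF th] PSC[OF True]] mmd2_Gk)
    show ?thesis using True unfolding Eg[OF th] jb cst_def mm by (simp add: algebra_simps)
  next
    case False
    then have p0: "pm m = 0" using pm_nonneg[of m] by simp
    have "\<bar>\<integral>z. JB m \<theta> z \<partial>PXM\<bar> \<le> (\<integral>z. I m z \<partial>PXM)"
      by (rule abs_int_bound[OF intJB[OF th] intI]) (rule JBb[OF th])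
    then have "(\<integral>z. JB m \<theta> z \<partial>PXM) = 0" using EI[of m] p0 by simp
    then show ?thesis unfolding Eg[OF th] cst_def using p0 by simp
  qed
  have L_pop: "L \<theta> = pop_risk k P PXM \<theta> + (\<Sum>m\<in>Ms. cst m)" if th: "\<theta> \<in> \<Theta>" for \<theta>
    unfolding L_def pop_risk_def Eg2[OF th]
    by (simp add: sum.distrib Ms_def e_def pm_def \<kappa>_def Pm_def Cm_def)
  have L_uniq: "L \<theta>inf < L \<theta>" if "\<theta> \<in> \<Theta>" "\<theta> \<noteq> \<theta>inf" for \<theta>
    using unique_min(2)[OF that] L_pop[OF that(1)] L_pop[OF unique_min(1)] by simp

  have cont_mmdC: "continuous_on \<Theta> (\<lambda>\<theta>. mmd (\<kappa> m) (Pm m \<theta>) (Cm m))" if pos: "pm m > 0" for m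
    unfolding continuous_on_def
  proof (intro ballI tendstoI)
    fix \<theta> and \<epsilon> :: real assume th: "\<theta> \<in> \<Theta>" and \<epsilon>: "\<epsilon> > 0"
    have c: "((\<lambda>\<theta>'. mmd (\<kappa> m) (Pm m \<theta>') (Pm m \<theta>)) \<longlongrightarrow> 0) (at \<theta> within \<Theta>)"
      using cont[OF pos[unfolded pm_def] th] by (simp add: \<kappa>_def Pm_def)
    have "eventually (\<lambda>\<theta>'. dist (mmd (\<kappa> m) (Pm m \<theta>') (Pm m \<theta>)) 0 < \<epsilon>) (at \<theta> within \<Theta>)"
      by (rule tendstoD[OF c \<epsilon>])
    then obtain d where d: "d > 0" "\<And>\<theta>'. \<theta>' \<in> \<Theta> \<Longrightarrow> \<theta>' \<noteq> \<theta> \<Longrightarrow> dist \<theta>' \<theta> < d \<Longrightarrow>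
        dist (mmd (\<kappa> m) (Pm m \<theta>') (Pm m \<theta>)) 0 < \<epsilon>"
      unfolding eventually_at by blast
    show "eventually (\<lambda>\<theta>'. dist (mmd (\<kappa> m) (Pm m \<theta>') (Cm m)) (mmd (\<kappa> m) (Pm m \<theta>) (Cm m)) < \<epsilon>) (at \<theta> within \<Theta>)"
      unfolding eventually_at
    proof (intro exI[of _ d] conjI ballI impI)
      fix \<theta>' assume th': "\<theta>' \<in> \<Theta>" "\<theta>' \<noteq> \<theta> \<and> dist \<theta>' \<theta> < d"
      have t1: "mmd (\<kappa> m) (Pm m \<theta>') (Cm m) \<le> mmd (\<kappa> m) (Pm m \<theta>') (Pm m \<theta>) + mmd (\<kappa> m) (Pm m \<theta>) (Cm m)"
        by (rule gk.mmd_triangle[OF gkm PSP[OF th'(1)] PSP[OF th] PSC[OF pos]])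
      have t2: "mmd (\<kappa> m) (Pm m \<theta>) (Cm m) \<le> mmd (\<kappa> m) (Pm m \<theta>) (Pm m \<theta>') + mmd (\<kappa> m) (Pm m \<theta>') (Cm m)"
        by (rule gk.mmd_triangle[OF gkm PSP[OF th] PSP[OF th'(1)] PSC[OF pos]])
      have s: "mmd (\<kappa> m) (Pm m \<theta>) (Pm m \<theta>') = mmd (\<kappa> m) (Pm m \<theta>') (Pm m \<theta>)"
        by (rule gk.mmd_sym[OF gkm PSP[OF th] PSP[OF th'(1)]])
      have nn: "0 \<le> mmd (\<kappa> m) (Pm m \<theta>') (Pm m \<theta>)" by (rule gk.mmd_nonneg[OF gkm PSP[OF th'(1)] PSP[OF th]])
      have "dist (mmd (\<kappa> m) (Pm m \<theta>') (Pm m \<theta>)) 0 < \<epsilon>" using d(2)[of \<theta>'] th' by blast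
      then show "dist (mmd (\<kappa> m) (Pm m \<theta>') (Cm m)) (mmd (\<kappa> m) (Pm m \<theta>) (Cm m)) < \<epsilon>"
        using t1 t2 s nn by (simp add: dist_real_def abs_less_iff)
    qed (rule d(1))
  qed
  have pop_cont: "continuous_on \<Theta> (pop_risk k P PXM)"
  proof -
    have "continuous_on \<Theta> (\<lambda>\<theta>. \<Sum>m\<in>Ms. pm m * (mmd (\<kappa> m) (Pm m \<theta>) (Cm m))^2)"
    proof (rule continuous_on_sum)
      fix m assume "m \<in> Ms"
      show "continuous_on \<Theta> (\<lambda>\<theta>. pm m * (mmd (\<kappa> m) (Pm m \<theta>) (Cm m))^2)"
      proof (cases "pm m > 0")
        case True then show ?thesis by (intro continuous_intros cont_mmdC)
      next
        case False then have "pm m = 0" using pm_nonneg[of m] by simp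
        then show ?thesis by simp
      qed
    qed
    moreover have "pop_risk k P PXM = (\<lambda>\<theta>. \<Sum>m\<in>Ms. pm m * (mmd (\<kappa> m) (Pm m \<theta>) (Cm m))^2)"
      by (simp add: pop_risk_def fun_eq_iff Ms_def e_def pm_def \<kappa>_def Pm_def Cm_def)
    ultimately show ?thesis by metis
  qed
  have L_cont: "continuous_on \<Theta> L"
  proof -
    have "continuous_on \<Theta> (\<lambda>\<theta>. pop_risk k P PXM \<theta> + (\<Sum>m\<in>Ms. cst m))"
      by (intro continuous_intros pop_cont)
    then show ?thesis by (rule continuous_on_cong[THEN iffD1, rotated 2]) (auto simp: L_pop)
  qed

  define netP where "netP = (\<lambda>m (j::nat) F. finite F \<and> F \<subseteq> \<Theta> \<and>
      (\<forall>\<theta>\<in>\<Theta>. \<exists>\<theta>'\<in>F. \<bar>mmd (\<kappa> m) (Pm m \<theta>) (Pm m \<theta>')\<bar> < 1 / real (Suc j)))"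
  define net where "net = (\<lambda>m j. if pm m > 0 then (SOME F. netP m j F) else {})"
  have net: "netP m j (net m j)" if pos: "pm m > 0" for m j
  proof -
    have "\<exists>F. netP m j F" unfolding netP_def
    proof (rule finite_net[OF compact])
      show "mmd (\<kappa> m) (Pm m \<theta>) (Pm m \<theta>) = 0" for \<theta> by (rule gk.mmd_self[OF gkm])
      show "((\<lambda>\<theta>. mmd (\<kappa> m) (Pm m \<theta>) (Pm m \<theta>')) \<longlongrightarrow> 0) (at \<theta>' within \<Theta>)" if "\<theta>' \<in> \<Theta>" for \<theta>'
        using cont[OF pos[unfolded pm_def] that] by (simp add: \<kappa>_def Pm_def)
    qed simp
    then show ?thesis unfolding net_def using pos by (simp add: someI_ex)
  qed
  have finnet: "finite (net m j)" for m j
    using net[of m j] by (cases "pm m > 0") (auto simp: net_def netP_def)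
  have netsub: "net m j \<subseteq> \<Theta>" for m j
    using net[of m j] by (cases "pm m > 0") (auto simp: net_def netP_def)

  have slln': "AE \<omega> in \<Omega>. (\<lambda>n. avg f n \<omega>) \<longlonglongrightarrow> (\<integral>z. f z \<partial>PXM)"
    if "f \<in> borel_measurable XMspace" "\<And>z. \<bar>f z\<bar> \<le> c" for f :: "_ \<Rightarrow> real" and c :: real
    unfolding avg_def by (rule slln[OF \<Omega> iid law that])
  have finU: "finite (UNIV :: ('d \<Rightarrow> bool) set)" by simp
  have AEgood: "AE \<omega> in \<Omega>. \<forall>m\<in>UNIV. ((\<lambda>n. avg (I m) n \<omega>) \<longlonglongrightarrow> pm m) \<and>
        ((\<lambda>n. avg (JD m) n \<omega>) \<longlonglongrightarrow> (\<integral>z. JD m z \<partial>PXM)) \<and>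
        (\<forall>j. \<forall>\<theta>\<in>net m j. (\<lambda>n. avg (JB m \<theta>) n \<omega>) \<longlonglongrightarrow> (\<integral>z. JB m \<theta> z \<partial>PXM))"
  proof (rule AE_finite_allI[OF finU])
    fix m :: "'d \<Rightarrow> bool"
    have a1: "AE \<omega> in \<Omega>. (\<lambda>n. avg (I m) n \<omega>) \<longlonglongrightarrow> pm m"
    proof -
      have Iabs: "\<bar>I m z\<bar> \<le> 1" for z using Ib[of m z] by simp
      show ?thesis using slln'[OF Im[of m] Iabs] EI[of m] by simp
    qed
    have a2: "AE \<omega> in \<Omega>. (\<lambda>n. avg (JD m) n \<omega>) \<longlonglongrightarrow> (\<integral>z. JD m z \<partial>PXM)"
      by (rule slln'[OF JDm JDb])
    have a3: "AE \<omega> in \<Omega>. \<forall>j. \<forall>\<theta>\<in>net m j. (\<lambda>n. avg (JB m \<theta>) n \<omega>) \<longlonglongrightarrow> (\<integral>z. JB m \<theta> z \<partial>PXM)"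
      unfolding AE_all_countable
    proof
      fix j
      show "AE \<omega> in \<Omega>. \<forall>\<theta>\<in>net m j. (\<lambda>n. avg (JB m \<theta>) n \<omega>) \<longlonglongrightarrow> (\<integral>z. JB m \<theta> z \<partial>PXM)"
      proof (rule AE_finite_allI[OF finnet])
        fix \<theta> assume "\<theta> \<in> net m j"
        then have th: "\<theta> \<in> \<Theta>" using netsub by blast
        show "AE \<omega> in \<Omega>. (\<lambda>n. avg (JB m \<theta>) n \<omega>) \<longlonglongrightarrow> (\<integral>z. JB m \<theta> z \<partial>PXM)"
        proof -
          have JBabs: "\<bar>JB m \<theta> z\<bar> \<le> 1" for z using JBb[OF th, of m z] Ib[of m z] by linarith
          show ?thesis by (rule slln'[OF JBm[OF th] JBabs])
        qed
      qed
    qed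
    show "AE \<omega> in \<Omega>. ((\<lambda>n. avg (I m) n \<omega>) \<longlonglongrightarrow> pm m) \<and>
        ((\<lambda>n. avg (JD m) n \<omega>) \<longlonglongrightarrow> (\<integral>z. JD m z \<partial>PXM)) \<and>
        (\<forall>j. \<forall>\<theta>\<in>net m j. (\<lambda>n. avg (JB m \<theta>) n \<omega>) \<longlonglongrightarrow> (\<integral>z. JB m \<theta> z \<partial>PXM))"
      using a1 a2 a3 by eventually_elim auto
  qed
  show ?thesis
    using AEgood
  proof (rule AE_mp, intro AE_I2 impI)
    fix \<omega> assume G: "\<forall>m\<in>UNIV. ((\<lambda>n. avg (I m) n \<omega>) \<longlonglongrightarrow> pm m) \<and>
        ((\<lambda>n. avg (JD m) n \<omega>) \<longlonglongrightarrow> (\<integral>z. JD m z \<partial>PXM)) \<and>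
        (\<forall>j. \<forall>\<theta>\<in>net m j. (\<lambda>n. avg (JB m \<theta>) n \<omega>) \<longlonglongrightarrow> (\<integral>z. JB m \<theta> z \<partial>PXM))"
    have avgI01: "0 \<le> avg (I m) n \<omega>" "avg (I m) n \<omega> \<le> 1" for m n
    proof -
      have "(\<Sum>i<n. I m (Z i \<omega>)) \<le> (\<Sum>i<n. 1)" by (intro sum_mono) (rule Ib)
      moreover have "0 \<le> (\<Sum>i<n. I m (Z i \<omega>))" by (intro sum_nonneg) (rule Ib)
      ultimately show "0 \<le> avg (I m) n \<omega>" "avg (I m) n \<omega> \<le> 1"
        unfolding avg_def by (auto simp: divide_le_eq)
    qed
    have unifJB: "eventually (\<lambda>n. \<forall>\<theta>\<in>\<Theta>. \<bar>avg (JB m \<theta>) n \<omega> - (\<integral>z. JB m \<theta> z \<partial>PXM)\<bar> \<le> \<epsilon>) sequentially"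
      if "\<epsilon> > 0" for m \<epsilon>
    proof (cases "pm m > 0")
      case True
      show ?thesis
      proof (rule uniform_from_net[OF finnet _ _ that])
        show "(\<lambda>n. avg (JB m \<theta>) n \<omega>) \<longlonglongrightarrow> (\<integral>z. JB m \<theta> z \<partial>PXM)" if "\<theta> \<in> net m j" for j \<theta>
          using G that by blast
        fix j \<theta> assume th: "\<theta> \<in> \<Theta>"
        from net[OF True, of j] th obtain \<theta>' where t': "\<theta>' \<in> net m j"
          "\<bar>mmd (\<kappa> m) (Pm m \<theta>) (Pm m \<theta>')\<bar> < 1 / real (Suc j)"
          unfolding netP_def by blast
        have th': "\<theta>' \<in> \<Theta>" using t'(1) netsub by blast
        have pw: "\<bar>JB m \<theta> z - JB m \<theta>' z\<bar> \<le> 1 / real (Suc j)" for z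
        proof -
          have "\<bar>B m \<theta> (sv m z) - B m \<theta>' (sv m z)\<bar> \<le> mmd (\<kappa> m) (Pm m \<theta>) (Pm m \<theta>')"
            unfolding B_def by (rule gk.B_diff'[OF gkm PSP[OF th] PSP[OF th'] svS])
          also have "\<dots> \<le> 1 / real (Suc j)" using t'(2) by simp
          finally have "\<bar>B m \<theta> (sv m z) - B m \<theta>' (sv m z)\<bar> \<le> 1 / real (Suc j)" .
          moreover have "\<bar>JB m \<theta> z - JB m \<theta>' z\<bar> = I m z * \<bar>B m \<theta> (sv m z) - B m \<theta>' (sv m z)\<bar>"
            using Ib[of m z] by (simp add: JB_def right_diff_distrib[symmetric] abs_mult)
          moreover have "I m z * \<bar>B m \<theta> (sv m z) - B m \<theta>' (sv m z)\<bar> \<le> 1 * \<bar>B m \<theta> (sv m z) - B m \<theta>' (sv m z)\<bar>"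
            by (rule mult_right_mono) (use Ib[of m z] in auto)
          ultimately have "\<bar>JB m \<theta> z - JB m \<theta>' z\<bar> \<le> \<bar>B m \<theta> (sv m z) - B m \<theta>' (sv m z)\<bar>" by simp
          then show ?thesis using \<open>\<bar>B m \<theta> (sv m z) - B m \<theta>' (sv m z)\<bar> \<le> 1 / real (Suc j)\<close> by (rule order_trans)
        qed
        show "\<exists>\<theta>'\<in>net m j. (\<forall>n. \<bar>avg (JB m \<theta>) n \<omega> - avg (JB m \<theta>') n \<omega>\<bar> \<le> 1 / real (Suc j)) \<and>
            \<bar>(\<integral>z. JB m \<theta> z \<partial>PXM) - (\<integral>z. JB m \<theta>' z \<partial>PXM)\<bar> \<le> 1 / real (Suc j)"
        proof (intro bexI[OF _ t'(1)] conjI allI)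
          fix n show "\<bar>avg (JB m \<theta>) n \<omega> - avg (JB m \<theta>') n \<omega>\<bar> \<le> 1 / real (Suc j)"
            unfolding avg_def by (rule avg_diff_bound[OF pw]) simp
        next
          show "\<bar>(\<integral>z. JB m \<theta> z \<partial>PXM) - (\<integral>z. JB m \<theta>' z \<partial>PXM)\<bar> \<le> 1 / real (Suc j)"
            by (rule int_diff_bound[OF PXM(1) intJB[OF th] intJB[OF th'] pw])
        qed
      qed
    next
      case False
      then have p0: "pm m = 0" using pm_nonneg[of m] by simp
      have "(\<lambda>n. avg (I m) n \<omega>) \<longlonglongrightarrow> pm m" using G by blast
      then have "(\<lambda>n. avg (I m) n \<omega>) \<longlonglongrightarrow> 0" using p0 by simp
      then have ev: "eventually (\<lambda>n. dist (avg (I m) n \<omega>) 0 < \<epsilon>) sequentially" using that by (rule tendstoD)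
      show ?thesis
      proof (rule eventually_mono[OF ev], intro ballI)
        fix n \<theta> assume d: "dist (avg (I m) n \<omega>) 0 < \<epsilon>" and th: "\<theta> \<in> \<Theta>"
        have "\<bar>\<integral>z. JB m \<theta> z \<partial>PXM\<bar> \<le> (\<integral>z. I m z \<partial>PXM)"
          by (rule abs_int_bound[OF intJB[OF th] intI]) (rule JBb[OF th])
        then have "(\<integral>z. JB m \<theta> z \<partial>PXM) = 0" using EI[of m] p0 by simp
        moreover have "\<bar>avg (JB m \<theta>) n \<omega>\<bar> \<le> avg (I m) n \<omega>"
          unfolding avg_def by (rule avg_abs_bound) (rule JBb[OF th])
        ultimately show "\<bar>avg (JB m \<theta>) n \<omega> - (\<integral>z. JB m \<theta> z \<partial>PXM)\<bar> \<le> \<epsilon>"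
          using d by (simp add: dist_real_def)
      qed
    qed
    have unif_m: "eventually (\<lambda>n. \<forall>\<theta>\<in>\<Theta>. \<bar>avg (g m \<theta>) n \<omega> - (\<integral>z. g m \<theta> z \<partial>PXM)\<bar> \<le> \<epsilon>) sequentially"
      if \<epsilon>: "\<epsilon> > 0" for m \<epsilon>
    proof -
      have e4: "\<epsilon> / 4 > 0" using \<epsilon> by simp
      have e1: "eventually (\<lambda>n. dist (avg (I m) n \<omega>) (pm m) < \<epsilon> / 4) sequentially"
        using G e4 by (intro tendstoD) blast+
      have e2: "eventually (\<lambda>n. dist (avg (JD m) n \<omega>) (\<integral>z. JD m z \<partial>PXM) < \<epsilon> / 4) sequentially"
        using G e4 by (intro tendstoD) blast+
      have e3: "eventually (\<lambda>n. \<forall>\<theta>\<in>\<Theta>. \<bar>avg (JB m \<theta>) n \<omega> - (\<integral>z. JB m \<theta> z \<partial>PXM)\<bar> \<le> \<epsilon> / 4) sequentially"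
        by (rule unifJB[OF e4])
      show ?thesis
      proof (rule eventually_mono[OF eventually_conj[OF e1 eventually_conj[OF e2 e3]]], intro ballI)
        fix n \<theta> assume H: "dist (avg (I m) n \<omega>) (pm m) < \<epsilon> / 4 \<and> dist (avg (JD m) n \<omega>) (\<integral>z. JD m z \<partial>PXM) < \<epsilon> / 4 \<and>
            (\<forall>\<theta>\<in>\<Theta>. \<bar>avg (JB m \<theta>) n \<omega> - (\<integral>z. JB m \<theta> z \<partial>PXM)\<bar> \<le> \<epsilon> / 4)" and th: "\<theta> \<in> \<Theta>"
        have h1: "\<bar>avg (I m) n \<omega> - pm m\<bar> < \<epsilon> / 4" using H by (simp add: dist_real_def)
        have h2: "\<bar>avg (JD m) n \<omega> - (\<integral>z. JD m z \<partial>PXM)\<bar> < \<epsilon> / 4" using H by (simp add: dist_real_def)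
        have h3: "\<bar>avg (JB m \<theta>) n \<omega> - (\<integral>z. JB m \<theta> z \<partial>PXM)\<bar> \<le> \<epsilon> / 4" using H th by blast
        have h4: "\<bar>A m \<theta> * (avg (I m) n \<omega> - pm m)\<bar> \<le> \<epsilon> / 4"
        proof -
          have "\<bar>A m \<theta> * (avg (I m) n \<omega> - pm m)\<bar> = \<bar>A m \<theta>\<bar> * \<bar>avg (I m) n \<omega> - pm m\<bar>" by (rule abs_mult)
          also have "\<dots> \<le> 1 * (\<epsilon> / 4)" using Ab[OF th, of m] h1 by (intro mult_mono) auto
          finally show ?thesis by simp
        qed
        have "avg (g m \<theta>) n \<omega> - (\<integral>z. g m \<theta> z \<partial>PXM) = A m \<theta> * (avg (I m) n \<omega> - pm m)
            - 2 * (avg (JB m \<theta>) n \<omega> - (\<integral>z. JB m \<theta> z \<partial>PXM)) + (avg (JD m) n \<omega> - (\<integral>z. JD m z \<partial>PXM))"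
          unfolding avg_g Eg[OF th] by (simp add: algebra_simps)
        then show "\<bar>avg (g m \<theta>) n \<omega> - (\<integral>z. g m \<theta> z \<partial>PXM)\<bar> \<le> \<epsilon>"
          using h2 h3 h4 by (rule abs3)
      qed
    qed
    have unif: "eventually (\<lambda>n. \<forall>\<theta>\<in>\<Theta>. \<bar>emp_risk k P (\<lambda>i. Z i \<omega>) n \<theta> - L \<theta>\<bar> \<le> \<epsilon>) sequentially"
      if \<epsilon>: "\<epsilon> > 0" for \<epsilon>
    proof -
      define c where "c = real (card Ms) + 1"
      have c: "c > 0" "real (card Ms) \<le> c" by (auto simp: c_def)
      have "eventually (\<lambda>n. \<forall>m\<in>Ms. \<forall>\<theta>\<in>\<Theta>. \<bar>avg (g m \<theta>) n \<omega> - (\<integral>z. g m \<theta> z \<partial>PXM)\<bar> \<le> \<epsilon> / c) sequentially"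
        using \<epsilon> c by (intro eventually_ball_finite[OF finMs] ballI unif_m) simp
      then show ?thesis
      proof (rule eventually_mono, intro ballI)
        fix n \<theta> assume H: "\<forall>m\<in>Ms. \<forall>\<theta>\<in>\<Theta>. \<bar>avg (g m \<theta>) n \<omega> - (\<integral>z. g m \<theta> z \<partial>PXM)\<bar> \<le> \<epsilon> / c"
          and th: "\<theta> \<in> \<Theta>"
        have "\<bar>emp_risk k P (\<lambda>i. Z i \<omega>) n \<theta> - L \<theta>\<bar> = \<bar>\<Sum>m\<in>Ms. avg (g m \<theta>) n \<omega> - (\<integral>z. g m \<theta> z \<partial>PXM)\<bar>"
          unfolding emp_eq[OF th] L_def by (simp add: sum_subtractf)
        also have "\<dots> \<le> (\<Sum>m\<in>Ms. \<bar>avg (g m \<theta>) n \<omega> - (\<integral>z. g m \<theta> z \<partial>PXM)\<bar>)" by (rule sum_abs)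
        also have "\<dots> \<le> (\<Sum>m\<in>Ms. \<epsilon> / c)" using H th by (intro sum_mono) blast
        also have "\<dots> = real (card Ms) * (\<epsilon> / c)" by simp
        also have "\<dots> \<le> c * (\<epsilon> / c)" using c \<epsilon> by (intro mult_right_mono) auto
        also have "\<dots> = \<epsilon>" using c by simp
        finally show "\<bar>emp_risk k P (\<lambda>i. Z i \<omega>) n \<theta> - L \<theta>\<bar> \<le> \<epsilon>" .
      qed
    qed
    show "(\<lambda>n. \<theta>n n \<omega>) \<longlonglongrightarrow> \<theta>inf"
    proof (rule argmin_consistent[OF compact L_cont unique_min(1) L_uniq])
      show "\<theta>n n \<omega> \<in> \<Theta>" for n using estimator by blast
      show "emp_risk k P (\<lambda>i. Z i \<omega>) n (\<theta>n n \<omega>) \<le> emp_risk k P (\<lambda>i. Z i \<omega>) n \<theta>" if "\<theta> \<in> \<Theta>" for n \<theta>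
        using estimator that by blast
    qed (use unif in auto)
  qed
qed

end
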